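(* Let $\tilde q=q^2$ and $|q|<1$. For every integer $v\geq 1$, \[ \sum_{n_1,\ldots,n_v\geq 0} \frac{\tilde q^{\sum_{i=1}^v N_i^2}}{(\tilde q)_{n_1}\cdots(\tilde q)_{n_{v-1}}(\tilde q)_{2n_v}}\cdot\frac{(q^3;q^6)_{n_v}}{(q;q^2)_{n_v}} =\frac{Q(q^{12v+6},q^{2v+1})}{(\tilde q)_\infty}, \] where $N_i=n_i+n_{i+1}+\cdots+n_v$ for $i=1,\ldots,v$ (for $v=1$ the product $(\tilde q)_{n_1}\cdots(\tilde q)_{n_{v-1}}$ is empty).
   Context: For a variable $a$ and integer $n\ge 0$, $(a;q)_n=(1-a)(1-aq)\cdots(1-aq^{n-1})$, $(\tilde q)_n=(\tilde q;\tilde q)_n$, $(a;q)_\infty=\lim_{n\to\infty}(a;q)_n$, and $(a_1,\ldots,a_k;q)_n=(a_1;q)_n\cdots(a_k;q)_n$ (also for $n=\infty$). For $|p|<1$ and $z\neq 0$, $Q(p,z):=(p,-z,-p/z;p)_\infty\,(p/z^2,\,z^2p;p^2)_\infty$. *)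

theory Defs
  imports "HOL-Analysis.Analysis"
begin

definition qpoch :: "complex \<Rightarrow> complex \<Rightarrow> nat \<Rightarrow> complex" where
  "qpoch a q n = (\<Prod>k<n. 1 - a * q ^ k)"

definition qpoch_inf :: "complex \<Rightarrow> complex \<Rightarrow> complex" where
  "qpoch_inf a q = lim (\<lambda>n. qpoch a q n)"

definition Qfun :: "complex \<Rightarrow> complex \<Rightarrow> complex" where
  "Qfun p z = qpoch_inf p p * qpoch_inf (- z) p * qpoch_inf (- p / z) p
              * qpoch_inf (p / z^2) (p^2) * qpoch_inf (z^2 * p) (p^2)"

end

theory Submission
  imports Defs
begin

lemma qpoch_0[simp]: "qpoch a X 0 = 1" by (simp add: qpoch_def)

lemma qpoch_Suc: "qpoch a X (Suc n) = qpoch a X n * (1 - a * X ^ n)"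
  by (simp add: qpoch_def)

lemma qpoch_Suc': "qpoch a X (Suc n) = (1 - a) * qpoch (a * X) X n"
proof (induction n)
  case 0 then show ?case by (simp add: qpoch_def)
next
  case (Suc n)
  show ?case using Suc by (simp add: qpoch_Suc power_Suc mult_ac)
qed

lemma qpoch_add: "qpoch a X (m + n) = qpoch a X m * qpoch (a * X ^ m) X n"
  by (induction n) (simp_all add: qpoch_Suc power_add mult_ac)

lemma qpoch_mult_split:
  "qpoch a X (k * n) = (\<Prod>r<k. qpoch (a * X ^ r) (X ^ k) n)"
proof (induction n)
  case 0 then show ?case by simp
next
  case (Suc n)
  have "qpoch a X (k * Suc n) = qpoch a X (k * n) * qpoch (a * X ^ (k * n)) X k"
    by (metis mult_Suc_right add.commute qpoch_add)
  also have "qpoch (a * X ^ (k * n)) X k = (\<Prod>r<k. 1 - a * X ^ r * (X ^ k) ^ n)"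
    by (simp add: qpoch_def power_add power_mult mult_ac)
  finally show ?case using Suc
    by (simp add: qpoch_Suc prod.distrib)
qed

lemma qpoch_neg: "qpoch a X n * qpoch (-a) X n = qpoch (a^2) (X^2) n"
  by (induction n) (simp_all add: qpoch_Suc algebra_simps power2_eq_square power_mult_distrib power_mult[symmetric] mult_2_right power_add)

lemma qpoch_nonzero:
  assumes "norm a < 1" "norm X \<le> 1"
  shows "qpoch a X n \<noteq> 0"
proof -
  have "1 - a * X ^ k \<noteq> 0" for k
  proof
    assume "1 - a * X ^ k = 0"
    hence "norm (a * X ^ k) = 1" by (metis eq_iff_diff_eq_0 norm_one)
    moreover have "norm (a * X ^ k) < 1"
      using assms by (simp add: norm_mult norm_power)
         (metis mult_less_cancel_left1 norm_ge_zero power_le_one less_le_trans le_less mult_le_one not_less)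
    ultimately show False by simp
  qed
  thus ?thesis by (simp add: qpoch_def)
qed

lemma qpoch_LIMSEQ:
  assumes "norm X < 1"
  shows "(\<lambda>n. qpoch a X n) \<longlonglongrightarrow> qpoch_inf a X"
    and "(\<And>k. a * X ^ k \<noteq> 1) \<Longrightarrow> qpoch_inf a X \<noteq> 0"
proof -
  define f where "f = (\<lambda>i::nat. 1 - a * X ^ i)"
  have "summable (\<lambda>i. norm (f i - 1))"
    unfolding f_def using assms
    by (simp add: norm_mult norm_power summable_mult summable_geometric)
  hence cp: "convergent_prod f"
    by (intro abs_convergent_prod_imp_convergent_prod summable_imp_abs_convergent_prod)
  have "(\<lambda>n. \<Prod>i\<le>n. f i) \<longlonglongrightarrow> prodinf f" by (rule convergent_prod_LIMSEQ[OF cp])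
  moreover have "(\<lambda>n. \<Prod>i\<le>n. f i) = (\<lambda>n. qpoch a X (Suc n))"
    by (simp add: f_def qpoch_def lessThan_Suc_atMost)
  ultimately have "(\<lambda>n. qpoch a X (Suc n)) \<longlonglongrightarrow> prodinf f" by simp
  hence L: "(\<lambda>n. qpoch a X n) \<longlonglongrightarrow> prodinf f" by (rule LIMSEQ_imp_Suc)
  hence "qpoch_inf a X = prodinf f"
    unfolding qpoch_inf_def by (rule limI)
  with L show "(\<lambda>n. qpoch a X n) \<longlonglongrightarrow> qpoch_inf a X" by simp
  assume "\<And>k. a * X ^ k \<noteq> 1"
  hence "\<And>i. f i \<noteq> 0" by (simp add: f_def)
  with cp \<open>qpoch_inf a X = prodinf f\<close> show "qpoch_inf a X \<noteq> 0"
    using prodinf_nonzero by metis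
qed

lemma ne1:
  fixes a X :: complex
  assumes "norm a < 1" "norm X \<le> 1"
  shows "a * X ^ k \<noteq> 1"
proof
  assume "a * X ^ k = 1"
  hence "norm (a * X ^ k) = 1" by simp
  moreover have "norm (X ^ k) \<le> 1" using assms by (simp add: norm_power power_le_one)
  hence "norm a * norm (X ^ k) < 1"
    using assms(1) by (meson le_less_trans mult_left_le norm_ge_zero)
  hence "norm (a * X ^ k) < 1" by (simp add: norm_mult)
  ultimately show False by simp
qed

lemma qpoch_bounded:
  assumes "norm X < 1"
  shows "\<exists>B>0. \<forall>n. norm (qpoch a X n) \<le> B"
proof -
  have "convergent (\<lambda>n. qpoch a X n)" using qpoch_LIMSEQ(1)[OF assms] convergentI by blast
  hence "Bseq (\<lambda>n. qpoch a X n)" by (rule convergent_imp_Bseq)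
  thus ?thesis by (simp add: Bseq_def)
qed

lemma qpoch_inv_bounded:
  assumes "norm X < 1" "norm a < 1"
  shows "\<exists>B>0. \<forall>n. norm (1 / qpoch a X n) \<le> B"
proof -
  have nz: "\<And>k. a * X ^ k \<noteq> 1" using assms by (intro ne1) auto
  have "(\<lambda>n. 1 / qpoch a X n) \<longlonglongrightarrow> 1 / qpoch_inf a X"
    by (intro tendsto_divide tendsto_const qpoch_LIMSEQ(1) assms qpoch_LIMSEQ(2) nz)
  hence "convergent (\<lambda>n. 1 / qpoch a X n)" using convergentI by blast
  hence "Bseq (\<lambda>n. 1 / qpoch a X n)" by (rule convergent_imp_Bseq)
  thus ?thesis by (simp add: Bseq_def)
qed

lemma tannery1:
  fixes b :: "nat \<Rightarrow> complex"
  assumes X: "norm X < 1" and sb: "summable (\<lambda>m. norm (b m))"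
  shows "(\<lambda>n. \<Sum>m\<le>n. b m / qpoch X X (n - m)) \<longlonglongrightarrow> suminf b / qpoch_inf X X"
proof -
  obtain B where B: "B > 0" "\<And>n. norm (1 / qpoch X X n) \<le> B"
    using qpoch_inv_bounded[OF X X] by blast
  define a where "a = (\<lambda>k n. if k \<le> n then b k / qpoch X X (n - k) else 0)"
  have nzX: "\<And>k. X * X ^ k \<noteq> 1" using X by (intro ne1) auto
  have lim: "(\<lambda>n. a k n) \<longlonglongrightarrow> b k / qpoch_inf X X" for k
  proof -
    have "(\<lambda>n. b k / qpoch X X (n - k)) \<longlonglongrightarrow> b k / qpoch_inf X X"
      by (intro tendsto_divide tendsto_const filterlim_compose[OF qpoch_LIMSEQ(1)[OF X]]
          filterlim_minus_const_nat_at_top qpoch_LIMSEQ(2)[OF X] nzX)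
    moreover have "eventually (\<lambda>n. b k / qpoch X X (n - k) = a k n) sequentially"
      using eventually_ge_at_top[of k] by eventually_elim (simp add: a_def)
    ultimately show ?thesis by (rule Lim_transform_eventually)
  qed
  have bd: "norm (a k n) \<le> norm (b k) * B" for k n
  proof -
    have "norm (b k / qpoch X X (n - k)) = norm (b k) * norm (1 / qpoch X X (n - k))"
      by (simp add: norm_divide)
    also have "\<dots> \<le> norm (b k) * B" using B(2) by (intro mult_left_mono) auto
    finally show ?thesis using B by (auto simp: a_def)
  qed
  have ev: "eventually (\<lambda>(k,n). norm (a k n) \<le> norm (b k) * B) (at_top \<times>\<^sub>F sequentially)"
    by (intro always_eventually) (simp add: case_prod_beta bd)
  have T: "((\<lambda>n. suminf (\<lambda>k. a k n)) \<longlonglongrightarrow> suminf (\<lambda>k. b k / qpoch_inf X X))"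
    using conjunct2[OF conjunct2[OF tannerys_theorem[of a "\<lambda>k. b k / qpoch_inf X X" sequentially "\<lambda>k. norm (b k) * B", OF lim ev summable_mult2[OF sb] sequentially_bot]]] .
  have "suminf (\<lambda>k. a k n) = (\<Sum>m\<le>n. b m / qpoch X X (n - m))" for n
    by (subst suminf_finite[of "{..n}"]) (auto simp: a_def)
  moreover have "suminf (\<lambda>k. b k / qpoch_inf X X) = suminf b / qpoch_inf X X"
    by (rule suminf_divide[OF summable_norm_cancel[OF sb]])
  ultimately show ?thesis using T by simp
qed

lemma tannery2:
  fixes b :: "nat \<Rightarrow> complex"
  assumes X: "norm X < 1" and sb: "summable (\<lambda>m. norm (b m))"
  shows "(\<lambda>n. \<Sum>m\<le>n. b m / (qpoch X X (n - m) * qpoch X X (n + m)))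
           \<longlonglongrightarrow> suminf b / (qpoch_inf X X * qpoch_inf X X)"
proof -
  obtain B where B: "B > 0" "\<And>n. norm (1 / qpoch X X n) \<le> B"
    using qpoch_inv_bounded[OF X X] by blast
  define a where "a = (\<lambda>k n. if k \<le> n then b k / (qpoch X X (n - k) * qpoch X X (n + k)) else 0)"
  have nzX: "\<And>k. X * X ^ k \<noteq> 1" using X by (intro ne1) auto
  have lim: "(\<lambda>n. a k n) \<longlonglongrightarrow> b k / (qpoch_inf X X * qpoch_inf X X)" for k
  proof -
    have "(\<lambda>n. b k / (qpoch X X (n - k) * qpoch X X (n + k))) \<longlonglongrightarrow> b k / (qpoch_inf X X * qpoch_inf X X)"
      by (intro tendsto_divide tendsto_mult tendsto_const filterlim_compose[OF qpoch_LIMSEQ(1)[OF X]]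
          filterlim_minus_const_nat_at_top filterlim_add_const_nat_at_top filterlim_ident
          no_zero_divisors qpoch_LIMSEQ(2)[OF X] nzX)
    moreover have "eventually (\<lambda>n. b k / (qpoch X X (n - k) * qpoch X X (n + k)) = a k n) sequentially"
      using eventually_ge_at_top[of k] by eventually_elim (simp add: a_def)
    ultimately show ?thesis by (rule Lim_transform_eventually)
  qed
  have bd: "norm (a k n) \<le> norm (b k) * (B * B)" for k n
  proof -
    have "norm (b k / (qpoch X X (n - k) * qpoch X X (n + k))) = norm (b k) * (norm (1 / qpoch X X (n - k)) * norm (1 / qpoch X X (n + k)))"
      by (simp add: norm_divide norm_mult)
    also have "\<dots> \<le> norm (b k) * (B * B)" using B by (intro mult_left_mono mult_mono) auto
    finally show ?thesis using B by (auto simp: a_def)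
  qed
  have ev: "eventually (\<lambda>(k,n). norm (a k n) \<le> norm (b k) * (B * B)) (at_top \<times>\<^sub>F sequentially)"
    by (intro always_eventually) (simp add: case_prod_beta bd)
  have T: "((\<lambda>n. suminf (\<lambda>k. a k n)) \<longlonglongrightarrow> suminf (\<lambda>k. b k / (qpoch_inf X X * qpoch_inf X X)))"
    using conjunct2[OF conjunct2[OF tannerys_theorem[of a "\<lambda>k. b k / (qpoch_inf X X * qpoch_inf X X)" sequentially "\<lambda>k. norm (b k) * (B * B)", OF lim ev summable_mult2[OF sb] sequentially_bot]]] .
  have "suminf (\<lambda>k. a k n) = (\<Sum>m\<le>n. b m / (qpoch X X (n - m) * qpoch X X (n + m)))" for n
    by (subst suminf_finite[of "{..n}"]) (auto simp: a_def)
  moreover have "suminf (\<lambda>k. b k / (qpoch_inf X X * qpoch_inf X X)) = suminf b / (qpoch_inf X X * qpoch_inf X X)"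
    by (rule suminf_divide[OF summable_norm_cancel[OF sb]])
  ultimately show ?thesis using T by simp
qed

definition qb :: "complex \<Rightarrow> nat \<Rightarrow> nat \<Rightarrow> complex" where
  "qb X n k = (if k \<le> n then qpoch X X n / (qpoch X X k * qpoch X X (n - k)) else 0)"

lemma qb_0[simp]: "qb X n 0 = 1" if "\<And>k. qpoch X X k \<noteq> 0"
  using that by (simp add: qb_def)

lemma qb_diag[simp]: "qb X n n = 1" if "\<And>k. qpoch X X k \<noteq> 0"
  using that by (simp add: qb_def)

lemma qb_gt[simp]: "n < k \<Longrightarrow> qb X n k = 0"
  by (simp add: qb_def)

lemma pascal_aux:
  fixes A D M u w :: complex
  assumes "A \<noteq> 0" "D \<noteq> 0" "1 - u \<noteq> 0" "1 - w \<noteq> 0"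
  shows "M * (1 - u * w) / (A * (1 - u) * (D * (1 - w))) = M / (A * (1 - u) * D) + w * (M / (A * (D * (1 - w))))"
    and "M * (1 - u * w) / (A * (1 - u) * (D * (1 - w))) = M / (A * (D * (1 - w))) + u * (M / (A * (1 - u) * D))"
proof -
  have a: "A * (1 - u) * (D * (1 - w)) \<noteq> 0" "A * (1 - u) * D \<noteq> 0" "A * (D * (1 - w)) \<noteq> 0"
    using assms by auto
  show "M * (1 - u * w) / (A * (1 - u) * (D * (1 - w))) = M / (A * (1 - u) * D) + w * (M / (A * (D * (1 - w))))"
    using a assms by (simp add: divide_simps) (simp add: algebra_simps)
  show "M * (1 - u * w) / (A * (1 - u) * (D * (1 - w))) = M / (A * (D * (1 - w))) + u * (M / (A * (1 - u) * D))"
    using a assms by (simp add: divide_simps) (simp add: algebra_simps)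
qed

lemma qb_pascal:
  assumes nz: "\<And>k. qpoch X X k \<noteq> 0" and "k \<le> m"
  shows "qb X (Suc m) (Suc k) = qb X m (Suc k) + X ^ (m - k) * qb X m k"
    and "qb X (Suc m) (Suc k) = qb X m k + X ^ (Suc k) * qb X m (Suc k)"
proof -
  have "qb X (Suc m) (Suc k) = qb X m (Suc k) + X ^ (m - k) * qb X m k
       \<and> qb X (Suc m) (Suc k) = qb X m k + X ^ (Suc k) * qb X m (Suc k)"
  proof (cases "k = m")
    case True
    then show ?thesis using nz by simp
  next
    case False
    then obtain d where m: "m = k + Suc d" using assms(2)
      by (metis add_Suc_right le_add_diff_inverse le_neq_implies_less less_imp_Suc_add)
    define A where "A = qpoch X X k"
    define D where "D = qpoch X X d"
    define M where "M = qpoch X X m"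
    have e1: "qpoch X X (Suc k) = A * (1 - X ^ Suc k)" by (simp add: A_def qpoch_Suc)
    have e2: "qpoch X X (Suc d) = D * (1 - X ^ Suc d)" by (simp add: D_def qpoch_Suc)
    have e3: "qpoch X X (Suc m) = M * (1 - X ^ Suc m)" by (simp add: M_def qpoch_Suc)
    have nzA: "A \<noteq> 0" "D \<noteq> 0" "M \<noteq> 0" using nz by (auto simp: A_def D_def M_def)
    have nz1: "1 - X ^ Suc k \<noteq> 0" "1 - X ^ Suc d \<noteq> 0"
      using nz[of "Suc k"] nz[of "Suc d"] by (auto simp: qpoch_Suc)
    have s1: "qb X (Suc m) (Suc k) = M * (1 - X ^ Suc m) / (A * (1 - X ^ Suc k) * (D * (1 - X ^ Suc d)))"
      unfolding qb_def using m e1 e2 e3 by simp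
    have s2: "qb X m (Suc k) = M / (A * (1 - X ^ Suc k) * D)"
      unfolding qb_def using m e1 by (simp add: D_def M_def)
    have s3: "qb X m k = M / (A * (D * (1 - X ^ Suc d)))"
      unfolding qb_def using m e2 by (simp add: A_def M_def)
    have md: "m - k = Suc d" using m by simp
    have p: "X ^ Suc m = X ^ Suc k * X ^ Suc d" using m by (simp add: power_add[symmetric])
    show ?thesis unfolding s1 s2 s3 md p using pascal_aux[OF nzA(1,2) nz1] by simp
  qed
  thus "qb X (Suc m) (Suc k) = qb X m (Suc k) + X ^ (m - k) * qb X m k"
    and "qb X (Suc m) (Suc k) = qb X m k + X ^ (Suc k) * qb X m (Suc k)" by auto
qed

lemma exp_aux: "l \<le> m \<Longrightarrow> 2 * (m - l) + Suc l * l = 2 * m + l * (l - 1)"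
  by (cases l) (auto simp: algebra_simps)

lemma qbinom_thm:
  assumes nz: "\<And>k. qpoch (x^2) (x^2) k \<noteq> 0"
  shows "(\<Prod>i<m. w + y * x^(2*i)) = (\<Sum>k\<le>m. qb (x^2) m k * x^(k*(k-1)) * y^k * w^(m-k))"
proof (induction m)
  case 0 then show ?case using nz by simp
next
  case (Suc m)
  let ?X = "x^2"
  have "(\<Sum>k\<le>Suc m. qb ?X (Suc m) k * x^(k*(k-1)) * y^k * w^(Suc m-k))
      = w^(Suc m) + (\<Sum>l\<le>m. qb ?X (Suc m) (Suc l) * x^(Suc l*l) * y^Suc l * w^(m-l))"
    using nz by (subst sum.atMost_Suc_shift) (simp del: sum.atMost_Suc)
  also have "\<dots> = w^(Suc m) + (\<Sum>l\<le>m. qb ?X m (Suc l) * x^(Suc l*l) * y^Suc l * w^(m-l))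
      + (\<Sum>l\<le>m. ?X^(m-l) * qb ?X m l * x^(Suc l*l) * y^Suc l * w^(m-l))"
  proof -
    have "(\<Sum>l\<le>m. qb ?X (Suc m) (Suc l) * x^(Suc l*l) * y^Suc l * w^(m-l))
        = (\<Sum>l\<le>m. (qb ?X m (Suc l) + ?X^(m-l) * qb ?X m l) * x^(Suc l*l) * y^Suc l * w^(m-l))"
      by (rule sum.cong[OF refl]) (simp add: qb_pascal(1)[OF nz])
    thus ?thesis by (simp add: sum.distrib[symmetric] algebra_simps)
  qed
  also have "w^(Suc m) + (\<Sum>l\<le>m. qb ?X m (Suc l) * x^(Suc l*l) * y^Suc l * w^(m-l))
      = (\<Sum>k\<le>Suc m. qb ?X m k * x^(k*(k-1)) * y^k * w^(Suc m-k))"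
    using nz by (subst sum.atMost_Suc_shift) (simp del: sum.atMost_Suc)
  also have "\<dots> = w * (\<Sum>k\<le>m. qb ?X m k * x^(k*(k-1)) * y^k * w^(m-k))"
  proof -
    have "(\<Sum>k\<le>Suc m. qb ?X m k * x^(k*(k-1)) * y^k * w^(Suc m-k))
       = (\<Sum>k\<le>m. qb ?X m k * x^(k*(k-1)) * y^k * w^(Suc m-k))" by simp
    also have "\<dots> = (\<Sum>k\<le>m. w * (qb ?X m k * x^(k*(k-1)) * y^k * w^(m-k)))"
      by (rule sum.cong[OF refl]) (simp add: Suc_diff_le mult_ac)
    finally show ?thesis by (simp add: sum_distrib_left)
  qed
  also have "(\<Sum>l\<le>m. ?X^(m-l) * qb ?X m l * x^(Suc l*l) * y^Suc l * w^(m-l))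
      = (y * x^(2*m)) * (\<Sum>k\<le>m. qb ?X m k * x^(k*(k-1)) * y^k * w^(m-k))"
  proof -
    have P: "?X^(m-l) * x^(Suc l*l) = x^(2*m) * x^(l*(l-1))" if "l \<le> m" for l
      using exp_aux[OF that] by (simp add: power_mult[symmetric] power_add[symmetric])
    have "(\<Sum>l\<le>m. ?X^(m-l) * qb ?X m l * x^(Suc l*l) * y^Suc l * w^(m-l))
        = (\<Sum>l\<le>m. (y * x^(2*m)) * (qb ?X m l * x^(l*(l-1)) * y^l * w^(m-l)))"
    proof (rule sum.cong[OF refl])
      fix l assume "l \<in> {..m}"
      hence l: "l \<le> m" by simp
      have "?X^(m-l) * qb ?X m l * x^(Suc l*l) * y^Suc l * w^(m-l)
          = (?X^(m-l) * x^(Suc l*l)) * (qb ?X m l * y^Suc l * w^(m-l))" by (simp only: mult_ac)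
      also have "\<dots> = (x^(2*m) * x^(l*(l-1))) * (qb ?X m l * y^Suc l * w^(m-l))" by (simp only: P[OF l])
      also have "\<dots> = (y * x^(2*m)) * (qb ?X m l * x^(l*(l-1)) * y^l * w^(m-l))"
        by (simp only: power_Suc mult_ac)
      finally show "?X^(m-l) * qb ?X m l * x^(Suc l*l) * y^Suc l * w^(m-l)
          = (y * x^(2*m)) * (qb ?X m l * x^(l*(l-1)) * y^l * w^(m-l))" .
    qed
    thus ?thesis by (simp only: sum_distrib_left)
  qed
  finally show ?case using Suc by (simp add: algebra_simps power2_eq_square power_mult)
qed

lemma atMost_insert_lessThan: "{..(N::nat)} = insert N {..<N}" by auto

lemma pascal2_sum:
  assumes nz: "\<And>k. qpoch Q Q k \<noteq> 0"
  shows "(\<Sum>i\<le>Suc N. qb Q (Suc N) i * F i) = (\<Sum>i\<le>N. Q^i * qb Q N i * F i + qb Q N i * F (Suc i))"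
proof -
  have "(\<Sum>i\<le>Suc N. qb Q (Suc N) i * F i) = F 0 + (\<Sum>l\<le>N. qb Q (Suc N) (Suc l) * F (Suc l))"
    using nz by (subst sum.atMost_Suc_shift) (simp del: sum.atMost_Suc)
  also have "(\<Sum>l\<le>N. qb Q (Suc N) (Suc l) * F (Suc l)) = (\<Sum>l\<le>N. (qb Q N l + Q^(Suc l) * qb Q N (Suc l)) * F (Suc l))"
    by (rule sum.cong[OF refl]) (simp add: qb_pascal(2)[OF nz])
  also have "\<dots> = (\<Sum>l\<le>N. qb Q N l * F (Suc l)) + (\<Sum>l\<le>N. Q^(Suc l) * qb Q N (Suc l) * F (Suc l))"
    by (simp add: sum.distrib algebra_simps)
  also have "(\<Sum>l\<le>N. Q^(Suc l) * qb Q N (Suc l) * F (Suc l)) = (\<Sum>l<N. Q^(Suc l) * qb Q N (Suc l) * F (Suc l))"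
    by (simp add: atMost_insert_lessThan)
  also have "F 0 + ((\<Sum>l\<le>N. qb Q N l * F (Suc l)) + (\<Sum>l<N. Q^(Suc l) * qb Q N (Suc l) * F (Suc l)))
     = (\<Sum>i\<le>N. Q^i * qb Q N i * F i) + (\<Sum>l\<le>N. qb Q N l * F (Suc l))"
  proof -
    have S1: "(\<Sum>i\<le>N. Q^i * qb Q N i * F i) = F 0 + (\<Sum>l<N. Q^(Suc l) * qb Q N (Suc l) * F (Suc l))"
      by (simp only: sum.atMost_shift) (simp add: nz)
    show ?thesis unfolding S1 by (simp only: add_ac)
  qed
  finally show ?thesis by (simp only: sum.distrib)
qed

lemma U_lemma:
  assumes nz: "\<And>k. qpoch Q Q k \<noteq> 0"
  shows "(\<Sum>i\<le>N. qb Q N i * a^i * Q^(i^2) * qpoch (a*Q^(Suc i)) Q (N-i)) = 1"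
proof (induction N arbitrary: a)
  case 0 then show ?case using nz by simp
next
  case (Suc N)
  define F where "F = (\<lambda>i. a^i * Q^(i^2) * qpoch (a*Q^(Suc i)) Q (Suc N - i))"
  have "(\<Sum>i\<le>Suc N. qb Q (Suc N) i * a^i * Q^(i^2) * qpoch (a*Q^(Suc i)) Q (Suc N-i))
      = (\<Sum>i\<le>Suc N. qb Q (Suc N) i * F i)" by (simp add: F_def mult_ac)
  also have "\<dots> = (\<Sum>i\<le>N. Q^i * qb Q N i * F i + qb Q N i * F (Suc i))"
    by (rule pascal2_sum[OF nz])
  also have "\<dots> = (\<Sum>i\<le>N. qb Q N i * (a*Q)^i * Q^(i^2) * qpoch ((a*Q)*Q^(Suc i)) Q (N-i))"
  proof (rule sum.cong[OF refl])
    fix i assume "i \<in> {..N}"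
    hence i: "i \<le> N" by simp
    define R where "R = qpoch (a*Q^(Suc (Suc i))) Q (N-i)"
    have F1: "F i = a^i * Q^(i^2) * ((1 - a*Q^(Suc i)) * R)"
      unfolding F_def R_def using i by (simp add: Suc_diff_le qpoch_Suc' mult_ac)
    have F2: "F (Suc i) = a^i * Q^(i^2) * (a * Q^i * Q^(Suc i) * R)"
    proof -
      have "Suc i ^ 2 = i^2 + i + Suc i" by (simp add: power2_eq_square)
      thus ?thesis unfolding F_def R_def by (simp add: power_add mult_ac)
    qed
    have R: "qpoch ((a*Q)*Q^(Suc i)) Q (N-i) = R" unfolding R_def by (simp add: mult_ac)
    show "Q^i * qb Q N i * F i + qb Q N i * F (Suc i) = qb Q N i * (a*Q)^i * Q^(i^2) * qpoch ((a*Q)*Q^(Suc i)) Q (N-i)"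
      unfolding F1 F2 R by (simp add: algebra_simps power_mult_distrib)
  qed
  also have "\<dots> = 1" by (rule Suc.IH)
  finally show ?case .
qed

lemma frac_aux:
  fixes A B C D E X Y Z :: complex
  assumes "A \<noteq> 0" "B \<noteq> 0"
  shows "(X*Y*Z)/(C*D*E) = X/(A*B) * (A/(D*C) * Y * Z * (B/E))"
  using assms by (simp add: field_simps)

lemma inner_identity:
  assumes nz: "\<And>k. qpoch Q Q k \<noteq> 0" and jn: "j \<le> n"
  shows "(\<Sum>m\<in>{j..n}. Q^(m^2) / (qpoch Q Q (n-m) * qpoch Q Q (m-j) * qpoch Q Q (m+j)))
         = Q^(j^2) / (qpoch Q Q (n-j) * qpoch Q Q (n+j))"
proof -
  define P where "P = qpoch Q Q"
  define N where "N = n - j"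
  have n: "n = N + j" using jn by (simp add: N_def)
  have PN: "P (i + 2*j) * qpoch (Q^(2*j) * Q^(Suc i)) Q (N-i) = P (N + 2*j)" if "i \<le> N" for i
  proof -
    have "P (N + 2*j) = P ((i + 2*j) + (N - i))" using that by (simp add: add.commute)
    also have "\<dots> = P (i + 2*j) * qpoch (Q * Q^(i+2*j)) Q (N - i)"
      unfolding P_def by (rule qpoch_add)
    also have "Q * Q^(i+2*j) = Q^(2*j) * Q^(Suc i)" by (simp only: power_Suc power_add mult_ac)
    finally show ?thesis by (rule sym)
  qed
  have U: "(\<Sum>i\<le>N. qb Q N i * (Q^(2*j))^i * Q^(i^2) * qpoch (Q^(2*j)*Q^(Suc i)) Q (N-i)) = 1"
    by (rule U_lemma[OF nz])
  have "(\<Sum>m\<in>{j..n}. Q^(m^2) / (P (n-m) * P (m-j) * P (m+j)))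
      = (\<Sum>i\<le>N. Q^((j+i)^2) / (P (N-i) * P i * P (i + 2*j)))"
  proof -
    have e: "j + i + j = i + 2*j" for i by simp
    show ?thesis by (subst sum.atLeastAtMost_shift_0[OF jn]) (simp add: n atLeast0AtMost e)
  qed
  also have "\<dots> = (\<Sum>i\<le>N. Q^(j^2) / (P N * P (N + 2*j)) *
                    (qb Q N i * (Q^(2*j))^i * Q^(i^2) * qpoch (Q^(2*j)*Q^(Suc i)) Q (N-i)))"
  proof (rule sum.cong[OF refl])
    fix i assume "i \<in> {..N}"
    hence i: "i \<le> N" by simp
    have nzP: "P k \<noteq> 0" for k using nz by (simp add: P_def)
    have qbi: "qb Q N i = P N / (P i * P (N - i))" using i by (simp add: qb_def P_def)
    have e: "Q^((j+i)^2) = Q^(j^2) * (Q^(2*j))^i * Q^(i^2)"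
    proof -
      have "(j+i)^2 = j^2 + (2*j)*i + i^2" by (simp add: power2_eq_square algebra_simps)
      thus ?thesis by (simp only: power_add power_mult)
    qed
    have qp: "qpoch (Q^(2*j)*Q^(Suc i)) Q (N-i) = P (N + 2*j) / P (i + 2*j)"
      using PN[OF i] nzP[of "i + 2*j"] by (simp add: eq_divide_eq mult.commute)
    show "Q^((j+i)^2) / (P (N-i) * P i * P (i + 2*j)) = Q^(j^2) / (P N * P (N + 2*j)) *
                    (qb Q N i * (Q^(2*j))^i * Q^(i^2) * qpoch (Q^(2*j)*Q^(Suc i)) Q (N-i))"
      unfolding qbi qp e by (rule frac_aux[OF nzP nzP])
  qed
  also have "\<dots> = Q^(j^2) / (P N * P (N + 2*j))"
    by (subst sum_distrib_left[symmetric]) (simp only: U mult_1_right)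
  also have "N + 2*j = n + j" using n by simp
  finally show ?thesis by (simp add: P_def n)
qed

lemma swap_triangle:
  "(\<Sum>m\<le>(n::nat). \<Sum>j\<le>m. G m j) = (\<Sum>j\<le>n. \<Sum>m\<in>{j..n}. G m j :: complex)"
proof (induction n)
  case 0 then show ?case by simp
next
  case (Suc n)
  have "(\<Sum>j\<le>Suc n. \<Sum>m\<in>{j..Suc n}. G m j) = (\<Sum>j\<le>n. \<Sum>m\<in>{j..Suc n}. G m j) + G (Suc n) (Suc n)"
    by simp
  also have "(\<Sum>j\<le>n. \<Sum>m\<in>{j..Suc n}. G m j) = (\<Sum>j\<le>n. (\<Sum>m\<in>{j..n}. G m j) + G (Suc n) j)"
    by (rule sum.cong[OF refl]) (simp add: atLeastAtMostSuc_conv add.commute)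
  finally have R: "(\<Sum>j\<le>Suc n. \<Sum>m\<in>{j..Suc n}. G m j) = (\<Sum>j\<le>n. \<Sum>m\<in>{j..n}. G m j) + (\<Sum>j\<le>n. G (Suc n) j) + G (Suc n) (Suc n)"
    by (simp only: sum.distrib)
  have L: "(\<Sum>m\<le>Suc n. \<Sum>j\<le>m. G m j) = (\<Sum>m\<le>n. \<Sum>j\<le>m. G m j) + ((\<Sum>j\<le>n. G (Suc n) j) + G (Suc n) (Suc n))"
    by (simp only: sum.atMost_Suc[of _ n])
  show ?case unfolding L R Suc.IH by (simp only: add.assoc)
qed

lemma bailey_step:
  assumes nz: "\<And>k. qpoch Q Q k \<noteq> 0"
  shows "(\<Sum>m\<le>n. Q^(m^2) / qpoch Q Q (n-m) * (\<Sum>j\<le>m. g j / (qpoch Q Q (m-j) * qpoch Q Q (m+j))))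
       = (\<Sum>j\<le>n. Q^(j^2) * g j / (qpoch Q Q (n-j) * qpoch Q Q (n+j)))"
proof -
  have "(\<Sum>m\<le>n. Q^(m^2) / qpoch Q Q (n-m) * (\<Sum>j\<le>m. g j / (qpoch Q Q (m-j) * qpoch Q Q (m+j))))
      = (\<Sum>m\<le>n. \<Sum>j\<le>m. g j * (Q^(m^2) / (qpoch Q Q (n-m) * qpoch Q Q (m-j) * qpoch Q Q (m+j))))"
    unfolding sum_distrib_left by (intro sum.cong refl) (simp add: mult.commute)
  also have "\<dots> = (\<Sum>j\<le>n. \<Sum>m\<in>{j..n}. g j * (Q^(m^2) / (qpoch Q Q (n-m) * qpoch Q Q (m-j) * qpoch Q Q (m+j))))"
    by (rule swap_triangle)
  also have "\<dots> = (\<Sum>j\<le>n. g j * (Q^(j^2) / (qpoch Q Q (n-j) * qpoch Q Q (n+j))))"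
  proof (rule sum.cong[OF refl])
    fix j assume "j \<in> {..n}"
    hence jn: "j \<le> n" by simp
    show "(\<Sum>m\<in>{j..n}. g j * (Q^(m^2) / (qpoch Q Q (n-m) * qpoch Q Q (m-j) * qpoch Q Q (m+j))))
        = g j * (Q^(j^2) / (qpoch Q Q (n-j) * qpoch Q Q (n+j)))"
      by (subst sum_distrib_left[symmetric]) (simp only: inner_identity[OF nz jn])
  qed
  also have "\<dots> = (\<Sum>j\<le>n. Q^(j^2) * g j / (qpoch Q Q (n-j) * qpoch Q Q (n+j)))"
    by (rule sum.cong[OF refl]) (simp add: mult.commute)
  finally show ?thesis .
qed

lemma ex1: "1 \<le> (n::nat) \<Longrightarrow> j \<le> n \<Longrightarrow> (n+j)*(n+j-1) + (2*n-1)*(n-j) = j*j + (n*(n-1) + (2*n-1)*n)"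
proof -
  assume a: "1 \<le> n" "j \<le> n"
  hence b: "1 \<le> n + j" "1 \<le> 2*n" by auto
  have "int ((n+j)*(n+j-1) + (2*n-1)*(n-j)) = int (j*j + (n*(n-1) + (2*n-1)*n))"
    by (simp only: of_nat_add of_nat_mult of_nat_diff[OF b(1)] of_nat_diff[OF b(2)] of_nat_diff[OF a(2)]
       of_nat_diff[OF a(1)] of_nat_1 of_nat_numeral) (simp add: algebra_simps)
  thus ?thesis by (simp only: of_nat_eq_iff)
qed

lemma ex2: "1 \<le> (n::nat) \<Longrightarrow> j \<le> n \<Longrightarrow> (n-j)*(n-j-1) + (2*n-1)*(n+j) = j*j + (n*(n-1) + (2*n-1)*n)"
proof -
  assume a: "1 \<le> n" "j \<le> n"
  show ?thesis
  proof (cases "j = n")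
    case True
    have b: "1 \<le> 2*n" using a by auto
    have "int ((n-j)*(n-j-1) + (2*n-1)*(n+j)) = int (j*j + (n*(n-1) + (2*n-1)*n))"
      unfolding True by (simp only: diff_self_eq_0 mult_0 add_0 of_nat_add of_nat_mult of_nat_diff[OF b]
       of_nat_diff[OF a(1)] of_nat_1 of_nat_numeral) (simp add: algebra_simps)
    thus ?thesis by (simp only: of_nat_eq_iff)
  next
    case False
    hence b: "1 \<le> n - j" "1 \<le> 2*n" using a by auto
    have "int ((n-j)*(n-j-1) + (2*n-1)*(n+j)) = int (j*j + (n*(n-1) + (2*n-1)*n))"
      by (simp only: of_nat_add of_nat_mult of_nat_diff[OF b(1)] of_nat_diff[OF b(2)] of_nat_diff[OF a(2)]
       of_nat_diff[OF a(1)] of_nat_1 of_nat_numeral) (simp add: algebra_simps)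
    thus ?thesis by (simp only: of_nat_eq_iff)
  qed
qed

definition om :: complex where "om = Complex (1/2) (sqrt 3 / 2)"

lemma om_prod: "om * (1 - om) = 1"
  by (simp add: om_def complex_eq_iff algebra_simps power2_eq_square)

lemma om_nz: "om \<noteq> 0" using om_prod by auto

lemma norm_om: "norm om = 1"
  by (simp add: om_def cmod_def power2_eq_square)

lemma norm_om': "norm (1 - om) = 1"
  by (simp add: om_def cmod_def power2_eq_square)

definition cc :: "nat \<Rightarrow> complex" where
  "cc j = (if j = 0 then 1 else om^j + (1 - om)^j)"

lemma norm_cc: "norm (cc j) \<le> 2"
proof -
  have "norm (om^j + (1-om)^j) \<le> norm (om^j) + norm ((1-om)^j)" by (rule norm_triangle_ineq)
  also have "\<dots> = 2" by (simp add: norm_power norm_om norm_om')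
  finally show ?thesis by (simp add: cc_def)
qed

lemma qpoch_zero_a[simp]: "qpoch 0 X n = 1" by (simp add: qpoch_def)

lemma prod_split_add: "(\<Prod>i<m+(n::nat). f i) = (\<Prod>i<m. f i) * (\<Prod>i<n. f (m+i) :: complex)"
  by (induction n) (simp_all add: mult_ac)

lemma sum_pair:
  "(\<Sum>k\<le>2*(n::nat). h k) = (\<Sum>j\<le>n. if j = 0 then h n else h (n+j) + h (n-j) :: complex)"
proof -
  have A: "(\<Sum>k\<le>2*n. h k) = (\<Sum>k<n. h k) + (\<Sum>k\<in>{n..2*n}. h k)"
  proof -
    have "{..2*n} = {..<n} \<union> {n..2*n}" by auto
    moreover have "{..<n} \<inter> {n..2*n} = {}" by auto
    ultimately show ?thesis by (simp add: sum.union_disjoint)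
  qed
  have B: "(\<Sum>k\<in>{n..2*n}. h k) = (\<Sum>j\<le>n. h (n+j))"
    by (subst sum.atLeastAtMost_shift_0) (auto simp: atLeast0AtMost mult_2)
  have C: "(\<Sum>k<n. h k) = (\<Sum>i<n. h (n - Suc i))"
    by (rule sum.nat_diff_reindex[symmetric])
  have D: "(\<Sum>i<n. h (n - Suc i)) = (\<Sum>j\<in>{Suc 0..n}. h (n - j))"
    by (simp add: sum.atLeast1_atMost_eq)
  have E: "(\<Sum>j\<le>n. h (n+j)) = h n + (\<Sum>j\<in>{Suc 0..n}. h (n+j))"
    by (simp add: sum.atLeast1_atMost_eq sum.atMost_shift)
  have F: "(\<Sum>j\<le>n. if j = 0 then h n else h (n+j) + h (n-j)) = h n + (\<Sum>j\<in>{Suc 0..n}. h (n+j) + h (n-j))"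
    by (simp add: sum.atLeast1_atMost_eq sum.atMost_shift)
  show ?thesis unfolding A B C D E F by (simp add: sum.distrib)
qed

lemma sum_double_lt: "(\<Sum>i<n. 2*i) = n*(n-1::nat)"
proof (induction n)
  case 0 then show ?case by simp
next
  case (Suc n) then show ?case by (cases n) (simp_all add: algebra_simps)
qed

lemma jtp_finite_main:
  assumes x: "norm x < 1" and x0: "x \<noteq> 0" and n1: "1 \<le> n"
  shows "(\<Sum>j\<le>n. x^(j^2) * cc j / (qpoch (x^2) (x^2) (n-j) * qpoch (x^2) (x^2) (n+j)))
         = qpoch (x^3) (x^6) n / (qpoch (x^2) (x^2) (2*n) * qpoch x (x^2) n)"
proof -
  define X where "X = x^2"
  define P where "P = qpoch X X"
  have nX: "norm X < 1" using x by (simp add: X_def norm_power power_less_one_iff)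
  have nzP: "P k \<noteq> 0" for k unfolding P_def by (rule qpoch_nonzero) (use nX in auto)
  have nzx: "qpoch x X n \<noteq> 0" by (rule qpoch_nonzero) (use x nX in auto)
  define w where "w = x^(2*n-1)"
  define E where "E = n*(n-1) + (2*n-1)*n"
  define K where "K = om^n * x^E"
  define h where "h = (\<lambda>k. qb X (2*n) k * x^(k*(k-1)) * om^k * w^(2*n-k))"
  define L where "L = (\<Sum>j\<le>n. x^(j^2) * cc j / (P (n-j) * P (n+j)))"
  define H where "H = (\<Prod>i<n. 1 + x^(2*i+1) + x^(2*(2*i+1)))"
  have QB: "(\<Prod>i<2*n. w + om * x^(2*i)) = (\<Sum>k\<le>2*n. h k)"
    unfolding h_def X_def by (rule qbinom_thm) (use nzP in \<open>simp add: P_def X_def\<close>)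
  have hp: "h (n+j) = P (2*n) * K * (x^(j^2) * om^j / (P (n-j) * P (n+j)))" if "j \<le> n" for j
  proof -
    have qb1: "qb X (2*n) (n+j) = P (2*n) / (P (n+j) * P (n-j))"
      using that by (simp add: qb_def P_def)
    have ee: "x^((n+j)*(n+j-1)) * w^(2*n-(n+j)) = x^(j^2) * x^E"
      unfolding w_def E_def power_mult[symmetric] power_add[symmetric]
      using ex1[OF n1 that] by (simp add: power2_eq_square mult.commute)
    show ?thesis unfolding h_def qb1 K_def
      using ee by (simp add: power_add field_simps)
  qed
  have hm: "h (n-j) = P (2*n) * K * (x^(j^2) * (1-om)^j / (P (n-j) * P (n+j)))" if "j \<le> n" for j
  proof -
    have qb1: "qb X (2*n) (n-j) = P (2*n) / (P (n-j) * P (n+j))"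
      using that by (simp add: qb_def P_def)
    have ee: "x^((n-j)*(n-j-1)) * w^(2*n-(n-j)) = x^(j^2) * x^E"
      unfolding w_def E_def power_mult[symmetric] power_add[symmetric]
      using ex2[OF n1 that] that by (simp add: power2_eq_square mult.commute)
    have oo: "om^(n-j) = om^n * (1-om)^j"
    proof -
      have "om^n * (1-om)^j = om^(n-j) * (om^j * (1-om)^j)"
        using that by (simp add: power_add[symmetric])
      also have "om^j * (1-om)^j = 1" by (simp add: power_mult_distrib[symmetric] om_prod)
      finally show ?thesis by simp
    qed
    show ?thesis unfolding h_def qb1 K_def oo
      using ee by (simp add: field_simps)
  qed
  have S: "(\<Sum>k\<le>2*n. h k) = P (2*n) * K * L"
  proof -
    have "(\<Sum>k\<le>2*n. h k) = (\<Sum>j\<le>n. if j = 0 then h n else h (n+j) + h (n-j))"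
      by (rule sum_pair)
    also have "\<dots> = (\<Sum>j\<le>n. P (2*n) * K * (x^(j^2) * cc j / (P (n-j) * P (n+j))))"
    proof (rule sum.cong[OF refl])
      fix j assume "j \<in> {..n}"
      hence j: "j \<le> n" by simp
      show "(if j = 0 then h n else h (n+j) + h (n-j)) = P (2*n) * K * (x^(j^2) * cc j / (P (n-j) * P (n+j)))"
      proof (cases "j = 0")
        case True
        then show ?thesis using hp[of 0] by (simp add: cc_def)
      next
        case False
        then show ?thesis using hp[OF j] hm[OF j] by (simp add: cc_def algebra_simps add_divide_distrib)
      qed
    qed
    also have "\<dots> = P (2*n) * K * L"
      unfolding L_def by (simp add: sum_distrib_left)
    finally show ?thesis .
  qed
  have Pr: "(\<Prod>i<2*n. w + om * x^(2*i)) = K * H"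
  proof -
    define f where "f = (\<lambda>i. w + om * x^(2*i))"
    have "(\<Prod>i<2*n. f i) = (\<Prod>i<n. f i) * (\<Prod>i<n. f (n+i))"
      using prod_split_add[of f n n] by (simp add: mult_2)
    also have "(\<Prod>i<n. f (n+i)) = (\<Prod>i<n. w * (1 + om * x^(2*i+1)))"
    proof (rule prod.cong[OF refl])
      fix i assume "i \<in> {..<n}"
      have "2*(n+i) = (2*n-1) + (2*i+1)" using n1 by simp
      hence "x^(2*(n+i)) = w * x^(2*i+1)" unfolding w_def by (simp only: power_add)
      thus "f (n+i) = w * (1 + om * x^(2*i+1))"
        unfolding f_def by (simp add: algebra_simps)
    qed
    also have "(\<Prod>i<n. f i) = (\<Prod>i<n. x^(2*i) * om * (1 + (1-om) * x^(2*(n - Suc i)+1)))"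
    proof (rule prod.cong[OF refl])
      fix i assume "i \<in> {..<n}"
      hence "2*i + (2*(n - Suc i)+1) = 2*n-1" by simp
      hence "x^(2*i) * x^(2*(n - Suc i)+1) = w" unfolding w_def by (metis power_add)
      hence "x^(2*i) * om * (1 + (1-om) * x^(2*(n - Suc i)+1)) = om * x^(2*i) + (om * (1 - om)) * (x^(2*i) * x^(2*(n - Suc i)+1))"
        by (simp add: algebra_simps)
      also have "\<dots> = f i" using \<open>x^(2*i) * x^(2*(n - Suc i)+1) = w\<close> by (simp add: om_prod f_def)
      finally show "f i = x^(2*i) * om * (1 + (1-om) * x^(2*(n - Suc i)+1))" by simp
    qed
    also have "\<dots> = (\<Prod>i<n. x^(2*i)) * om^n * (\<Prod>i<n. 1 + (1-om) * x^(2*(n - Suc i)+1))"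
      by (simp add: prod.distrib)
    also have "(\<Prod>i<n. 1 + (1-om) * x^(2*(n - Suc i)+1)) = (\<Prod>i<n. 1 + (1-om) * x^(2*i+1))"
      by (rule prod.nat_diff_reindex[where g = "\<lambda>i. 1 + (1-om) * x^(2*i+1)"])
    also have "(\<Prod>i<n. x^(2*i)) = x^(n*(n-1))"
      by (simp add: power_sum[symmetric] sum_double_lt)
    also have "(\<Prod>i<n. w * (1 + om * x^(2*i+1))) = w^n * (\<Prod>i<n. 1 + om * x^(2*i+1))"
      by (simp add: prod.distrib)
    finally have "(\<Prod>i<2*n. f i) = (x^(n*(n-1)) * om^n * w^n) * ((\<Prod>i<n. 1 + (1-om) * x^(2*i+1)) * (\<Prod>i<n. 1 + om * x^(2*i+1)))"
      by (simp add: mult_ac)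
    also have "(\<Prod>i<n. 1 + (1-om) * x^(2*i+1)) * (\<Prod>i<n. 1 + om * x^(2*i+1)) = H"
    proof -
      have "(1 + (1-om) * y) * (1 + om * y) = 1 + y + y^2" for y
      proof -
        have "(1 + (1-om) * y) * (1 + om * y) = 1 + y + (om * (1-om)) * y^2"
          by (simp add: algebra_simps power2_eq_square)
        thus ?thesis by (simp add: om_prod)
      qed
      note Y = this
      show ?thesis unfolding H_def prod.distrib[symmetric]
      proof (intro prod.cong refl)
        fix i
        have "x^(2*(2*i+1)) = (x^(2*i+1))^2" by (simp only: power_mult[symmetric] mult.commute)
        thus "(1 + (1-om) * x^(2*i+1)) * (1 + om * x^(2*i+1)) = 1 + x^(2*i+1) + x^(2*(2*i+1))"
          using Y[of "x^(2*i+1)"] by simp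
      qed
    qed
    also have "x^(n*(n-1)) * om^n * w^n = K"
      unfolding K_def E_def w_def by (simp add: power_add power_mult[symmetric] mult_ac)
    finally show ?thesis unfolding f_def .
  qed
  have HH: "H * qpoch x X n = qpoch (x^3) (x^6) n"
  proof -
    have "H * qpoch x X n = (\<Prod>i<n. (1 + x^(2*i+1) + x^(2*(2*i+1))) * (1 - x * X^i))"
      unfolding H_def qpoch_def by (simp add: prod.distrib)
    also have "\<dots> = (\<Prod>i<n. 1 - x^3 * (x^6)^i)"
    proof (rule prod.cong[OF refl])
      fix i
      have a: "x * X^i = x^(2*i+1)" unfolding X_def by (simp add: power_mult[symmetric] mult.commute)
      have b: "x^3 * (x^6)^i = (x^(2*i+1))^3"
        by (simp add: power_mult[symmetric] power_add[symmetric] algebra_simps)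
      show "(1 + x^(2*i+1) + x^(2*(2*i+1))) * (1 - x * X^i) = 1 - x^3 * (x^6)^i"
      proof -
        have c: "x^(2*(2*i+1)) = (x^(2*i+1))^2" by (simp only: power_mult[symmetric] mult.commute)
        have gen: "\<And>y::complex. (1 + y + y^2) * (1 - y) = 1 - y^3"
          by (simp add: algebra_simps power2_eq_square power3_eq_cube)
        show ?thesis unfolding a b c by (rule gen)
      qed
    qed
    finally show ?thesis by (simp add: qpoch_def)
  qed
  have K0: "K \<noteq> 0" unfolding K_def using om_nz x0 by simp
  have "K * (P (2*n) * L) = K * H" using QB S Pr by (simp add: mult_ac)
  hence "P (2*n) * L = H" using K0 by (rule mult_left_cancel[THEN iffD1, rotated])
  hence "L = H / P (2*n)" using nzP by (simp add: eq_divide_eq mult.commute)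
  also have "\<dots> = qpoch (x^3) (x^6) n / (P (2*n) * qpoch x X n)"
    using HH[symmetric] nzx nzP by (simp add: field_simps)
  finally show ?thesis unfolding L_def P_def X_def .
qed

lemma jtp_finite:
  assumes x: "norm x < 1"
  shows "(\<Sum>j\<le>n. x^(j^2) * cc j / (qpoch (x^2) (x^2) (n-j) * qpoch (x^2) (x^2) (n+j)))
         = qpoch (x^3) (x^6) n / (qpoch (x^2) (x^2) (2*n) * qpoch x (x^2) n)"
proof (cases "x = 0 \<or> n = 0")
  case True
  then show ?thesis
  proof
    assume "x = 0"
    thus ?thesis by (subst sum.atMost_shift) (simp add: cc_def power_0_left)
  next
    assume "n = 0"
    thus ?thesis by (simp add: cc_def)
  qed
next
  case False
  thus ?thesis using jtp_finite_main[OF x] by simp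
qed

lemma qpoch_LIMSEQ_mult:
  assumes "norm X < 1" "0 < k"
  shows "(\<lambda>n. qpoch a X (k*n)) \<longlonglongrightarrow> qpoch_inf a X"
proof -
  have "strict_mono (\<lambda>n::nat. k*n)" using assms(2) by (simp add: strict_mono_def)
  from LIMSEQ_subseq_LIMSEQ[OF qpoch_LIMSEQ(1)[OF assms(1)] this] show ?thesis by (simp add: o_def)
qed


lemma theta_summable:
  assumes x: "norm (x::complex) < 1"
  shows "summable (\<lambda>j. norm (x^(j^2) * cc j))"
proof (rule summable_comparison_test)
  show "summable (\<lambda>j. 2 * norm x ^ j)" using x by (intro summable_mult summable_geometric) auto
  show "\<exists>N. \<forall>j\<ge>N. norm (norm (x^(j^2) * cc j)) \<le> 2 * norm x ^ j"
  proof (intro exI allI impI)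
    fix j :: nat
    have "norm x ^ (j^2) \<le> norm x ^ j"
      by (rule power_decreasing) (use x in \<open>auto simp: power2_eq_square\<close>)
    moreover have "norm (cc j) \<le> 2" by (rule norm_cc)
    ultimately have "norm x ^ (j^2) * norm (cc j) \<le> norm x ^ j * 2"
      by (intro mult_mono) auto
    thus "norm (norm (x^(j^2) * cc j)) \<le> 2 * norm x ^ j" by (simp add: norm_mult norm_power mult.commute)
  qed
qed

lemma theta_eval:
  assumes x: "norm (x::complex) < 1"
  shows "(\<Sum>j. x^(j^2) * cc j) = qpoch_inf (x^2) (x^2) * qpoch_inf (x^3) (x^6) / qpoch_inf x (x^2)"
proof -
  define X where "X = x^2"
  have nX: "norm X < 1" using x by (simp add: X_def norm_power power_less_one_iff)
  have nX6: "norm (x^6) < 1" using x by (simp add: norm_power power_less_one_iff)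
  have L1: "(\<lambda>n. (\<Sum>j\<le>n. x^(j^2) * cc j / (qpoch X X (n-j) * qpoch X X (n+j))))
             \<longlonglongrightarrow> (\<Sum>j. x^(j^2) * cc j) / (qpoch_inf X X * qpoch_inf X X)"
    by (rule tannery2[OF nX theta_summable[OF x]])
  have nzX: "qpoch_inf X X \<noteq> 0" by (rule qpoch_LIMSEQ(2)[OF nX]) (rule ne1, use nX in auto)
  have nz1: "qpoch_inf x X \<noteq> 0" by (rule qpoch_LIMSEQ(2)[OF nX]) (rule ne1, use x nX in auto)
  have L2: "(\<lambda>n. qpoch (x^3) (x^6) n / (qpoch X X (2*n) * qpoch x X n))
             \<longlonglongrightarrow> qpoch_inf (x^3) (x^6) / (qpoch_inf X X * qpoch_inf x X)"
  proof -
    have a: "(\<lambda>n. qpoch (x^3) (x^6) n) \<longlonglongrightarrow> qpoch_inf (x^3) (x^6)" by (rule qpoch_LIMSEQ(1)[OF nX6])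
    have b: "(\<lambda>n. qpoch X X (2*n)) \<longlonglongrightarrow> qpoch_inf X X" by (rule qpoch_LIMSEQ_mult[OF nX]) simp
    have c: "(\<lambda>n. qpoch x X n) \<longlonglongrightarrow> qpoch_inf x X" by (rule qpoch_LIMSEQ(1)[OF nX])
    show ?thesis by (rule tendsto_divide[OF a tendsto_mult[OF b c]]) (use nzX nz1 in simp)
  qed
  have "(\<lambda>n. (\<Sum>j\<le>n. x^(j^2) * cc j / (qpoch X X (n-j) * qpoch X X (n+j))))
        = (\<lambda>n. qpoch (x^3) (x^6) n / (qpoch X X (2*n) * qpoch x X n))"
    unfolding X_def by (intro ext jtp_finite x)
  hence L2': "(\<lambda>n. (\<Sum>j\<le>n. x^(j^2) * cc j / (qpoch X X (n-j) * qpoch X X (n+j))))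
             \<longlonglongrightarrow> qpoch_inf (x^3) (x^6) / (qpoch_inf X X * qpoch_inf x X)" using L2 by simp
  have "(\<Sum>j. x^(j^2) * cc j) / (qpoch_inf X X * qpoch_inf X X)
       = qpoch_inf (x^3) (x^6) / (qpoch_inf X X * qpoch_inf x X)"
    by (rule LIMSEQ_unique[OF L1 L2'])
  hence "(\<Sum>j. x^(j^2) * cc j) = qpoch_inf X X * qpoch_inf (x^3) (x^6) / qpoch_inf x X"
    using nzX nz1 by (simp add: field_simps)
  thus ?thesis by (simp add: X_def)
qed

lemma prod3: "(\<Prod>r<(3::nat). f r) = f 0 * f 1 * (f 2 :: complex)"
  by (simp add: numeral_3_eq_3 numeral_2_eq_2 mult_ac)
lemma prod2: "(\<Prod>r<(2::nat). f r) = f 0 * (f 1 :: complex)"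
  by (simp add: numeral_2_eq_2 mult_ac)
lemma prod6: "(\<Prod>r<(6::nat). f r) = f 0 * f 1 * f 2 * f 3 * f 4 * (f 5 :: complex)"
proof -
  have "(6::nat) = Suc (Suc (Suc (Suc (Suc (Suc 0)))))" by simp
  hence "(\<Prod>r<(6::nat). f r) = (\<Prod>r<Suc (Suc (Suc (Suc (Suc (Suc 0))))). f r)" by (simp only:)
  also have "\<dots> = f 0 * f 1 * f 2 * f 3 * f 4 * f 5"
    by (simp add: mult_ac eval_nat_numeral)
  finally show ?thesis .
qed

lemma finite_prod_id:
  fixes x :: complex
  shows "qpoch x (x^2) (3*n) * qpoch (x^6) (x^6) (2*n) * qpoch (-x) (x^6) n * qpoch (-(x^5)) (x^6) n
          * qpoch (x^4) (x^12) n * qpoch (x^8) (x^12) n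
         = qpoch (x^3) (x^6) n * qpoch (x^2) (x^2) (6*n)"
proof -
  have s3: "qpoch x (x^2) (3*n) = qpoch x (x^6) n * qpoch (x^3) (x^6) n * qpoch (x^5) (x^6) n"
  proof -
    have "qpoch x (x^2) (3*n) = (\<Prod>r<3. qpoch (x * (x^2)^r) ((x^2)^3) n)" by (rule qpoch_mult_split)
    also have "\<dots> = qpoch x (x^6) n * qpoch (x^3) (x^6) n * qpoch (x^5) (x^6) n"
      unfolding prod3 by (simp add: power_mult[symmetric] power_add[symmetric] power_Suc[symmetric])
    finally show ?thesis .
  qed
  have s2: "qpoch (x^6) (x^6) (2*n) = qpoch (x^6) (x^12) n * qpoch (x^12) (x^12) n"
  proof -
    have "qpoch (x^6) (x^6) (2*n) = (\<Prod>r<2. qpoch (x^6 * (x^6)^r) ((x^6)^2) n)" by (rule qpoch_mult_split)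
    also have "\<dots> = qpoch (x^6) (x^12) n * qpoch (x^12) (x^12) n"
      unfolding prod2 by (simp add: power_mult[symmetric] power_add[symmetric])
    finally show ?thesis .
  qed
  have s6: "qpoch (x^2) (x^2) (6*n) = qpoch (x^2) (x^12) n * qpoch (x^4) (x^12) n * qpoch (x^6) (x^12) n
              * qpoch (x^8) (x^12) n * qpoch (x^10) (x^12) n * qpoch (x^12) (x^12) n"
  proof -
    have "qpoch (x^2) (x^2) (6*n) = (\<Prod>r<6. qpoch (x^2 * (x^2)^r) ((x^2)^6) n)" by (rule qpoch_mult_split)
    also have "\<dots> = qpoch (x^2) (x^12) n * qpoch (x^4) (x^12) n * qpoch (x^6) (x^12) n
              * qpoch (x^8) (x^12) n * qpoch (x^10) (x^12) n * qpoch (x^12) (x^12) n"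
      unfolding prod6 by (simp add: power_mult[symmetric] power_add[symmetric])
    finally show ?thesis .
  qed
  have n1: "qpoch x (x^6) n * qpoch (-x) (x^6) n = qpoch (x^2) (x^12) n"
    using qpoch_neg[of x "x^6" n] by (simp add: power_mult[symmetric])
  have n5: "qpoch (x^5) (x^6) n * qpoch (-(x^5)) (x^6) n = qpoch (x^10) (x^12) n"
    using qpoch_neg[of "x^5" "x^6" n] by (simp add: power_mult[symmetric])
  show ?thesis unfolding s3 s2 s6
    using n1 n5 by (simp add: mult_ac)
qed

lemma div_pow_aux: "(x::complex)^6 / x = x^5" "(x::complex)^6 / x^2 = x^4"
  by (cases "x = 0"; simp add: power_eq_if eval_nat_numeral field_simps)+

lemma Qfun_eval:
  assumes x: "norm (x::complex) < 1"
  shows "Qfun (x^6) x = qpoch_inf (x^2) (x^2) * qpoch_inf (x^3) (x^6) / qpoch_inf x (x^2)"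
proof -
  have nx: "norm (x^k) < 1" if "k > 0" for k using x that by (simp add: norm_power power_less_one_iff)
  have nx2: "norm (x^2) < 1" and nx6: "norm (x^6) < 1" and nx12: "norm (x^12) < 1" by (auto intro: nx)
  define L where "L = (\<lambda>a X. qpoch_inf a X)"
  have A: "(\<lambda>n. qpoch x (x^2) (3*n) * qpoch (x^6) (x^6) (2*n) * qpoch (-x) (x^6) n * qpoch (-(x^5)) (x^6) n
          * qpoch (x^4) (x^12) n * qpoch (x^8) (x^12) n) \<longlonglongrightarrow>
          L x (x^2) * L (x^6) (x^6) * L (-x) (x^6) * L (-(x^5)) (x^6) * L (x^4) (x^12) * L (x^8) (x^12)"
    unfolding L_def
    by (intro tendsto_mult qpoch_LIMSEQ_mult[OF nx2] qpoch_LIMSEQ_mult[OF nx6]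
        qpoch_LIMSEQ(1)[OF nx6] qpoch_LIMSEQ(1)[OF nx12]) auto
  have B: "(\<lambda>n. qpoch (x^3) (x^6) n * qpoch (x^2) (x^2) (6*n)) \<longlonglongrightarrow> L (x^3) (x^6) * L (x^2) (x^2)"
    unfolding L_def
    by (intro tendsto_mult qpoch_LIMSEQ_mult[OF nx2] qpoch_LIMSEQ(1)[OF nx6]) auto
  have eq: "L x (x^2) * L (x^6) (x^6) * L (-x) (x^6) * L (-(x^5)) (x^6) * L (x^4) (x^12) * L (x^8) (x^12)
        = L (x^3) (x^6) * L (x^2) (x^2)"
    using LIMSEQ_unique[OF A B[folded finite_prod_id]] .
  have Q: "Qfun (x^6) x = L (x^6) (x^6) * L (-x) (x^6) * L (-(x^5)) (x^6) * L (x^4) (x^12) * L (x^8) (x^12)"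
    unfolding Qfun_def L_def
    by (simp add: div_pow_aux power_mult[symmetric] power_add[symmetric])
  have nz: "L x (x^2) \<noteq> 0" unfolding L_def
    by (rule qpoch_LIMSEQ(2)[OF nx2]) (rule ne1, use x nx2 in auto)
  have "L x (x^2) * Qfun (x^6) x = L (x^3) (x^6) * L (x^2) (x^2)"
    unfolding Q using eq by (simp add: mult_ac)
  thus ?thesis using nz unfolding L_def by (simp add: field_simps)
qed

lemma summable_poly_gauss:
  fixes r C :: real
  assumes r: "0 \<le> r" "r < 1"
  shows "summable (\<lambda>m::nat. C * real (m+1)^k * r^(m^2))"
proof (rule summable_comparison_test_ev)
  show "summable (\<lambda>m. \<bar>C\<bar> * (1/2)^m)" by (intro summable_mult summable_geometric) auto
  have "(\<lambda>m. 2^k * r^m) \<longlonglongrightarrow> 2^k * 0" by (intro tendsto_mult tendsto_const LIMSEQ_power_zero) (use r in auto)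
  hence "eventually (\<lambda>m. 2^k * r^m < 1/2) sequentially" by (rule order_tendstoD(2)) simp
  thus "eventually (\<lambda>m. norm (C * real (m+1)^k * r^(m^2)) \<le> \<bar>C\<bar> * (1/2)^m) sequentially"
  proof eventually_elim
    case (elim m)
    have "real (m+1) \<le> 2^m"
    proof -
      have "m + 1 \<le> (2::nat)^m" using less_exp[of m] by (simp add: Suc_le_eq)
      thus ?thesis by (metis of_nat_le_iff of_nat_numeral of_nat_power)
    qed
    hence "real (m+1)^k \<le> (2^m)^k" by (intro power_mono) auto
    also have "(2^m)^k = ((2::real)^k)^m" by (simp add: power_mult[symmetric] mult.commute)
    finally have a: "real (m+1)^k \<le> (2^k)^m" .
    have b: "r^(m^2) = (r^m)^m" by (simp add: power2_eq_square power_mult)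
    have "real (m+1)^k * r^(m^2) \<le> (2^k)^m * (r^m)^m"
      unfolding b by (intro mult_right_mono a) (use r in auto)
    also have "\<dots> = (2^k * r^m)^m" by (simp add: power_mult_distrib)
    also have "\<dots> \<le> (1/2)^m" by (intro power_mono) (use elim r in auto)
    finally have "real (m+1)^k * r^(m^2) \<le> (1/2)^m" .
    hence "\<bar>C\<bar> * (real (m+1)^k * r^(m^2)) \<le> \<bar>C\<bar> * (1/2)^m" by (intro mult_left_mono) auto
    thus ?case using r by (simp add: abs_mult)
  qed
qed

primrec gch :: "complex \<Rightarrow> nat \<Rightarrow> nat \<Rightarrow> complex" where
  "gch q 0 = (\<lambda>m. qpoch (q^3) (q^6) m / (qpoch (q^2) (q^2) (2*m) * qpoch q (q^2) m))"
| "gch q (Suc k) = (\<lambda>m. \<Sum>m'\<le>m. (q^2)^(m'^2) / qpoch (q^2) (q^2) (m-m') * gch q k m')"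

lemma gch_closed:
  assumes q: "norm q < 1"
  shows "gch q k m = (\<Sum>j\<le>m. q^((2*k+1)*j^2) * cc j / (qpoch (q^2) (q^2) (m-j) * qpoch (q^2) (q^2) (m+j)))"
proof (induction k arbitrary: m)
  case 0
  show ?case using jtp_finite[OF q, of m] by simp
next
  case (Suc k)
  have nQ: "norm (q^2) < 1" using q by (simp add: norm_power power_less_one_iff)
  have nz: "\<And>i. qpoch (q^2) (q^2) i \<noteq> 0" by (rule qpoch_nonzero) (use nQ in auto)
  have "gch q (Suc k) m = (\<Sum>m'\<le>m. (q^2)^(m'^2) / qpoch (q^2) (q^2) (m-m') *
          (\<Sum>j\<le>m'. q^((2*k+1)*j^2) * cc j / (qpoch (q^2) (q^2) (m'-j) * qpoch (q^2) (q^2) (m'+j))))"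
    by (simp add: Suc.IH)
  also have "\<dots> = (\<Sum>j\<le>m. (q^2)^(j^2) * (q^((2*k+1)*j^2) * cc j) / (qpoch (q^2) (q^2) (m-j) * qpoch (q^2) (q^2) (m+j)))"
    by (rule bailey_step[OF nz])
  also have "\<dots> = (\<Sum>j\<le>m. q^((2*Suc k+1)*j^2) * cc j / (qpoch (q^2) (q^2) (m-j) * qpoch (q^2) (q^2) (m+j)))"
  proof (rule sum.cong[OF refl])
    fix j
    have "(q^2)^(j^2) * q^((2*k+1)*j^2) = q^((2*Suc k+1)*j^2)"
      by (simp add: power_mult[symmetric] power_add[symmetric] algebra_simps)
    thus "(q^2)^(j^2) * (q^((2*k+1)*j^2) * cc j) / (qpoch (q^2) (q^2) (m-j) * qpoch (q^2) (q^2) (m+j))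
        = q^((2*Suc k+1)*j^2) * cc j / (qpoch (q^2) (q^2) (m-j) * qpoch (q^2) (q^2) (m+j))"
      by (simp add: mult.assoc[symmetric])
  qed
  finally show ?case .
qed

lemma gch_bound:
  assumes q: "norm q < 1" and B: "\<And>n. norm (1 / qpoch (q^2) (q^2) n) \<le> B"
  shows "norm (gch q k m) \<le> real (m+1) * (2*B*B)"
proof -
  have B0: "0 \<le> B" using B[of 0] by (metis norm_ge_zero order_trans)
  have "norm (gch q k m) \<le> (\<Sum>j\<le>m. norm (q^((2*k+1)*j^2) * cc j / (qpoch (q^2) (q^2) (m-j) * qpoch (q^2) (q^2) (m+j))))"
    unfolding gch_closed[OF q] by (rule norm_sum)
  also have "\<dots> \<le> (\<Sum>j\<le>m. 2*B*B)"
  proof (rule sum_mono)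
    fix j
    have a1: "norm (q^((2*k+1)*j^2)) \<le> 1" using q by (simp add: norm_power power_le_one)
    have a2: "norm (cc j) \<le> 2" by (rule norm_cc)
    have a: "norm (q^((2*k+1)*j^2) * cc j) \<le> 2"
    proof -
      have "norm (q^((2*k+1)*j^2)) * norm (cc j) \<le> 1 * 2" by (intro mult_mono) (use a1 a2 in auto)
      thus ?thesis by (simp add: norm_mult)
    qed
    have "norm (q^((2*k+1)*j^2) * cc j / (qpoch (q^2) (q^2) (m-j) * qpoch (q^2) (q^2) (m+j)))
        = norm (q^((2*k+1)*j^2) * cc j) * (norm (1 / qpoch (q^2) (q^2) (m-j)) * norm (1 / qpoch (q^2) (q^2) (m+j)))"
      by (simp add: norm_mult norm_divide)
    also have "\<dots> \<le> 2 * (B * B)"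
      by (intro mult_mono a B) (use B0 in auto)
    finally show "norm (q^((2*k+1)*j^2) * cc j / (qpoch (q^2) (q^2) (m-j) * qpoch (q^2) (q^2) (m+j))) \<le> 2*B*B"
      by (simp add: mult_ac)
  qed
  also have "\<dots> = real (m+1) * (2*B*B)" by simp
  finally show ?thesis .
qed

lemma Hsum:
  assumes q: "norm q < 1" and v: "v \<ge> 1"
  shows "summable (\<lambda>m. norm ((q^2)^(m^2) * gch q (v-1) m))"
    and "(\<lambda>m. (q^2)^(m^2) * gch q (v-1) m) sums (Qfun (q^(12* v+6)) (q^(2* v+1)) / qpoch_inf (q^2) (q^2))"
proof -
  define Q where "Q = q^2"
  define P where "P = qpoch Q Q"
  define H where "H = (\<lambda>m. Q^(m^2) * gch q (v-1) m)"
  have nQ: "norm Q < 1" using q by (simp add: Q_def norm_power power_less_one_iff)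
  obtain B where B: "B > 0" "\<And>n. norm (1 / qpoch Q Q n) \<le> B"
    using qpoch_inv_bounded[OF nQ nQ] by blast
  have sH: "summable (\<lambda>m. norm (H m))"
  proof (rule summable_comparison_test)
    show "summable (\<lambda>m. (2*B*B) * real (m+1)^1 * norm Q^(m^2))"
      by (rule summable_poly_gauss) (use nQ in auto)
    show "\<exists>N. \<forall>m\<ge>N. norm (norm (H m)) \<le> (2*B*B) * real (m+1)^1 * norm Q^(m^2)"
    proof (intro exI allI impI)
      fix m :: nat
      have "norm (gch q (v-1) m) \<le> real (m+1) * (2*B*B)"
        by (rule gch_bound[OF q]) (use B in \<open>simp add: Q_def\<close>)
      hence "norm Q^(m^2) * norm (gch q (v-1) m) \<le> norm Q^(m^2) * (real (m+1) * (2*B*B))"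
        by (intro mult_left_mono) auto
      thus "norm (norm (H m)) \<le> (2*B*B) * real (m+1)^1 * norm Q^(m^2)"
        by (simp add: H_def norm_mult norm_power mult_ac)
    qed
  qed
  thus "summable (\<lambda>m. norm ((q^2)^(m^2) * gch q (v-1) m))" by (simp add: H_def Q_def)
  define x where "x = q^(2* v+1)"
  have nx: "norm x < 1" unfolding x_def norm_power using q power_less_one_iff[OF norm_ge_zero[of q], of "2 * v + 1"] by simp
  have T1: "(\<lambda>n. \<Sum>m\<le>n. H m / P (n - m)) \<longlonglongrightarrow> suminf H / qpoch_inf Q Q"
    unfolding P_def by (rule tannery1[OF nQ sH])
  have T2: "(\<lambda>n. \<Sum>j\<le>n. x^(j^2) * cc j / (P (n-j) * P (n+j))) \<longlonglongrightarrow>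
             (\<Sum>j. x^(j^2) * cc j) / (qpoch_inf Q Q * qpoch_inf Q Q)"
    unfolding P_def by (rule tannery2[OF nQ theta_summable[OF nx]])
  have eqs: "(\<Sum>m\<le>n. H m / P (n - m)) = (\<Sum>j\<le>n. x^(j^2) * cc j / (P (n-j) * P (n+j)))" for n
  proof -
    have v': "v = Suc (v-1)" using v by simp
    have "(\<Sum>m\<le>n. H m / P (n - m)) = gch q (Suc (v-1)) n"
      by (simp add: H_def P_def Q_def mult_ac)
    also have "\<dots> = gch q v n" using v' by simp
    also have "\<dots> = (\<Sum>j\<le>n. q^((2* v+1)*j^2) * cc j / (P (n-j) * P (n+j)))"
      unfolding gch_closed[OF q] P_def Q_def ..
    also have "\<dots> = (\<Sum>j\<le>n. x^(j^2) * cc j / (P (n-j) * P (n+j)))"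
      unfolding x_def by (simp only: power_mult)
    finally show ?thesis .
  qed
  have nzL: "qpoch_inf Q Q \<noteq> 0" by (rule qpoch_LIMSEQ(2)[OF nQ]) (rule ne1, use nQ in auto)
  have "suminf H / qpoch_inf Q Q = (\<Sum>j. x^(j^2) * cc j) / (qpoch_inf Q Q * qpoch_inf Q Q)"
    using LIMSEQ_unique[OF T1 T2[folded eqs]] .
  hence "suminf H = (\<Sum>j. x^(j^2) * cc j) / qpoch_inf Q Q" using nzL by (simp add: field_simps)
  also have "(\<Sum>j. x^(j^2) * cc j) = Qfun (x^6) x"
    unfolding theta_eval[OF nx] Qfun_eval[OF nx] ..
  also have "x^6 = q^(12* v+6)"
  proof -
    have "(2 * v + 1) * 6 = 12 * v + 6" by simp
    thus ?thesis unfolding x_def power_mult[symmetric] by (simp only:)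
  qed
  finally have "suminf H = Qfun (q^(12* v+6)) (q^(2* v+1)) / qpoch_inf (q^2) (q^2)" by (simp add: x_def Q_def)
  moreover have "H sums suminf H" using summable_norm_cancel[OF sH] by (rule summable_sums)
  ultimately show "(\<lambda>m. (q^2)^(m^2) * gch q (v-1) m) sums (Qfun (q^(12* v+6)) (q^(2* v+1)) / qpoch_inf (q^2) (q^2))"
    by (simp add: H_def Q_def)
qed

definition Tm :: "nat \<Rightarrow> complex \<Rightarrow> (nat \<Rightarrow> nat) \<Rightarrow> complex" where
  "Tm v q n = (q^2) ^ (\<Sum>i=1..v. (\<Sum>j=i..v. n j)^2)
            / ((\<Prod>i\<in>{1..<v}. qpoch (q^2) (q^2) (n i)) * qpoch (q^2) (q^2) (2 * n v))
            * (qpoch (q^3) (q^6) (n v) / qpoch q (q^2) (n v))"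

definition Asupp :: "nat \<Rightarrow> (nat \<Rightarrow> nat) set" where
  "Asupp v = {n. \<forall>i. i \<notin> {1..v} \<longrightarrow> n i = 0}"

definition Fb :: "nat \<Rightarrow> nat \<Rightarrow> (nat \<Rightarrow> nat) set" where
  "Fb v m = {n \<in> Asupp v. (\<Sum>j=1..v. n j) = m}"

definition ins :: "nat \<Rightarrow> (nat \<Rightarrow> nat) \<Rightarrow> nat \<Rightarrow> nat" where
  "ins a n' = (\<lambda>i. if i = 0 then 0 else if i = 1 then a else n' (i - 1))"

definition sh :: "(nat \<Rightarrow> nat) \<Rightarrow> nat \<Rightarrow> nat" where
  "sh n = (\<lambda>i. if i = 0 then 0 else n (Suc i))"

lemma sum_1_Suc: "(\<Sum>j\<in>{1..Suc v}. f j) = f 1 + (\<Sum>j\<in>{1..v}. f (Suc j) :: 'a :: comm_monoid_add)"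
proof -
  have "(\<Sum>j\<in>{1..Suc v}. f j) = f 1 + (\<Sum>j\<in>{Suc 1..Suc v}. f j)"
    by (rule sum.atLeast_Suc_atMost) simp
  also have "(\<Sum>j\<in>{Suc 1..Suc v}. f j) = (\<Sum>j\<in>{1..v}. f (Suc j))"
    by (rule sum.shift_bounds_cl_Suc_ivl)
  finally show ?thesis .
qed

lemma prod_1_Suc: "1 \<le> v \<Longrightarrow> (\<Prod>i\<in>{1..<Suc v}. f i) = f 1 * (\<Prod>i\<in>{1..<v}. f (Suc i) :: 'a :: comm_monoid_mult)"
proof -
  assume v: "1 \<le> v"
  have "(\<Prod>i\<in>{1..<Suc v}. f i) = f 1 * (\<Prod>i\<in>{Suc 1..<Suc v}. f i)"
    by (rule prod.atLeast_Suc_lessThan) (use v in simp)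
  also have "(\<Prod>i\<in>{Suc 1..<Suc v}. f i) = (\<Prod>i\<in>{1..<v}. f (Suc i))"
    by (rule prod.shift_bounds_Suc_ivl)
  finally show ?thesis .
qed

lemma Fb_finite: "finite (Fb v m)"
proof (rule finite_subset)
  show "Fb v m \<subseteq> {n. \<forall>i. (i \<in> {1..v} \<longrightarrow> n i \<in> {..m}) \<and> (i \<notin> {1..v} \<longrightarrow> n i = 0)}"
  proof (rule subsetI, rule CollectI, intro allI conjI impI)
    fix n i assume n: "n \<in> Fb v m" and i: "i \<in> {1..v}"
    have "n i \<le> (\<Sum>j=1..v. n j)" using i by (intro member_le_sum) auto
    thus "n i \<in> {..m}" using n by (simp add: Fb_def)
  next
    fix n i assume "n \<in> Fb v m" "i \<notin> {1..v}"
    thus "n i = 0" by (simp add: Fb_def Asupp_def)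
  qed
  show "finite {n. \<forall>i. (i \<in> {1..v} \<longrightarrow> n i \<in> {..m}) \<and> (i \<notin> {1..v} \<longrightarrow> n i = 0)}"
    by (rule finite_set_of_finite_funs) auto
qed

lemma Fb_card: "card (Fb v m) \<le> (m+1)^v"
proof -
  have "card (Fb v m) \<le> card (PiE {1..v} (\<lambda>_. {..m}))"
  proof (rule card_inj_on_le)
    show "inj_on (\<lambda>f. restrict f {1..v}) (Fb v m)"
    proof (rule inj_onI)
      fix f g assume f: "f \<in> Fb v m" and g: "g \<in> Fb v m" and eq: "restrict f {1..v} = restrict g {1..v}"
      show "f = g"
      proof
        fix i show "f i = g i"
        proof (cases "i \<in> {1..v}")
          case True thus ?thesis using eq by (metis restrict_apply')
        next
          case False thus ?thesis using f g by (simp add: Fb_def Asupp_def)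
        qed
      qed
    qed
    show "(\<lambda>f. restrict f {1..v}) ` Fb v m \<subseteq> PiE {1..v} (\<lambda>_. {..m})"
    proof (rule image_subsetI, rule PiE_I)
      fix n i assume n: "n \<in> Fb v m" and i: "i \<in> {1..v}"
      have "n i \<le> (\<Sum>j=1..v. n j)" using i by (intro member_le_sum) auto
      thus "restrict n {1..v} i \<in> {..m}" using n i by (simp add: Fb_def)
    qed (auto simp: restrict_def)
    show "finite (PiE {1..v} (\<lambda>_. {..m::nat}))" by (intro finite_PiE) auto
  qed
  also have "\<dots> = (m+1)^v" by (simp add: card_PiE)
  finally show ?thesis .
qed

lemma ins_Suc: "ins a n' (Suc j) = (if j = 0 then a else n' j)"
  by (simp add: ins_def)

lemma sum_ins: "(\<Sum>j=i..v. ins a n' (Suc j)) = (\<Sum>j=i..v. n' j)" if "1 \<le> i"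
  using that by (intro sum.cong refl) (auto simp: ins_Suc)

lemma Tm_ins:
  assumes v: "1 \<le> v"
  shows "Tm (Suc v) q (ins a n') = (q^2)^((a + (\<Sum>j=1..v. n' j))^2) / qpoch (q^2) (q^2) a * Tm v q n'"
proof -
  define N where "N = ins a n'"
  define P where "P = qpoch (q^2) (q^2)"
  have N1: "N 1 = a" by (simp add: N_def ins_def)
  have NS: "N (Suc v) = n' v" using v by (simp add: N_def ins_Suc)
  have s1: "(\<Sum>j=1..Suc v. N j) = a + (\<Sum>j=1..v. n' j)"
    unfolding sum_1_Suc N1 N_def using sum_ins[where i=1 and a=a and n'=n' and v=v] by (simp add: ins_Suc)
  have s2: "(\<Sum>j=Suc i..Suc v. N j) = (\<Sum>j=i..v. n' j)" if "1 \<le> i" for i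
    unfolding sum.shift_bounds_cl_Suc_ivl N_def using sum_ins[OF that] by simp
  have E: "(\<Sum>i=1..Suc v. (\<Sum>j=i..Suc v. N j)^2) = (a + (\<Sum>j=1..v. n' j))^2 + (\<Sum>i=1..v. (\<Sum>j=i..v. n' j)^2)"
  proof -
    have "(\<Sum>i=1..Suc v. (\<Sum>j=i..Suc v. N j)^2) = (\<Sum>j=1..Suc v. N j)^2 + (\<Sum>i=1..v. (\<Sum>j=Suc i..Suc v. N j)^2)"
      by (rule sum_1_Suc)
    also have "(\<Sum>i=1..v. (\<Sum>j=Suc i..Suc v. N j)^2) = (\<Sum>i=1..v. (\<Sum>j=i..v. n' j)^2)"
    proof (rule sum.cong[OF refl])
      fix i assume "i \<in> {1..v}"
      hence "1 \<le> i" by simp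
      show "(\<Sum>j=Suc i..Suc v. N j)^2 = (\<Sum>j=i..v. n' j)^2" by (simp only: s2[OF \<open>1 \<le> i\<close>])
    qed
    finally show ?thesis unfolding s1 .
  qed
  have Pr: "(\<Prod>i\<in>{1..<Suc v}. P (N i)) = P a * (\<Prod>i\<in>{1..<v}. P (n' i))"
  proof -
    have "(\<Prod>i\<in>{1..<Suc v}. P (N i)) = P (N 1) * (\<Prod>i\<in>{1..<v}. P (N (Suc i)))"
      by (rule prod_1_Suc[OF v])
    also have "(\<Prod>i\<in>{1..<v}. P (N (Suc i))) = (\<Prod>i\<in>{1..<v}. P (n' i))"
      by (intro prod.cong refl) (auto simp: N_def ins_Suc)
    finally show ?thesis unfolding N1 .
  qed
  show ?thesis
    unfolding Tm_def N_def[symmetric] E Pr NS P_def[symmetric]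
    by (simp add: power_add field_simps)
qed

lemma Fb1: "Fb 1 m = {(\<lambda>i. if i = 1 then m else 0)}"
proof safe
  fix n assume n: "n \<in> Fb 1 m"
  show "n = (\<lambda>i. if i = 1 then m else 0)"
  proof
    fix i show "n i = (if i = 1 then m else 0)"
      using n by (cases "i = 1") (auto simp: Fb_def Asupp_def)
  qed
qed (auto simp: Fb_def Asupp_def)

lemma fiber_sum:
  assumes q: "norm q < 1" and v: "1 \<le> v"
  shows "(\<Sum>n\<in>Fb v m. Tm v q n) = (q^2)^(m^2) * gch q (v-1) m"
  using v
proof (induction v arbitrary: m rule: nat_induct_at_least)
  case base
  show ?case unfolding Fb1 by (simp add: Tm_def)
next
  case (Suc v)
  note v = Suc.hyps(1)
  define N2 where "N2 = (\<lambda>n::nat\<Rightarrow>nat. \<Sum>j=1..v. n (Suc j))"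
  define S where "S = Sigma {..m} (\<lambda>m'. Fb v m')"
  have sumS: "(\<Sum>j=1..Suc v. n j) = n 1 + N2 n" for n unfolding N2_def by (rule sum_1_Suc)
  have shS: "sh n (Suc j) = n (Suc (Suc j))" for n j by (simp add: sh_def)
  have sum_sh: "(\<Sum>j=1..v. sh n j) = N2 n" for n
    unfolding N2_def by (intro sum.cong refl) (auto simp: sh_def)
  have bij: "(\<Sum>n\<in>Fb (Suc v) m. Tm (Suc v) q n) = (\<Sum>p\<in>S. Tm (Suc v) q (ins (m - fst p) (snd p)))"
  proof (rule sum.reindex_bij_witness[where j = "\<lambda>n. (N2 n, sh n)" and i = "\<lambda>p. ins (m - fst p) (snd p)"])
    fix n assume n: "n \<in> Fb (Suc v) m"
    hence m: "n 1 + N2 n = m" using sumS[of n] by (simp add: Fb_def)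
    have n0: "n 0 = 0" using n by (simp add: Fb_def Asupp_def)
    show "ins (m - fst (N2 n, sh n)) (snd (N2 n, sh n)) = n"
    proof
      fix i show "ins (m - fst (N2 n, sh n)) (snd (N2 n, sh n)) i = n i"
        using m n0 by (cases i) (auto simp: ins_def sh_def)
    qed
    show "(N2 n, sh n) \<in> S"
    proof -
      have "sh n \<in> Asupp v" using n by (auto simp: Asupp_def Fb_def sh_def)
      moreover have "N2 n \<le> m" using m by simp
      ultimately show ?thesis using sum_sh[of n] by (simp add: S_def Fb_def)
    qed
    show "Tm (Suc v) q (ins (m - fst (N2 n, sh n)) (snd (N2 n, sh n))) = Tm (Suc v) q n"
      using \<open>ins (m - fst (N2 n, sh n)) (snd (N2 n, sh n)) = n\<close> by simp
  next
    fix p assume p: "p \<in> S"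
    obtain m' n' where p': "p = (m', n')" by (cases p)
    have m': "m' \<le> m" and n': "n' \<in> Asupp v" "(\<Sum>j=1..v. n' j) = m'"
      using p by (auto simp: S_def Fb_def p')
    have n'0: "n' 0 = 0" using n' by (simp add: Asupp_def)
    have N2i: "N2 (ins (m - m') n') = m'"
      unfolding N2_def using sum_ins[where i=1 and a="m-m'" and n'=n' and v=v] n' by simp
    have shi: "sh (ins (m - m') n') = n'"
    proof
      fix i show "sh (ins (m - m') n') i = n' i" using n'0 by (cases i) (auto simp: sh_def ins_def)
    qed
    show "(N2 (ins (m - fst p) (snd p)), sh (ins (m - fst p) (snd p))) = p"
      using N2i shi p' by simp
    show "ins (m - fst p) (snd p) \<in> Fb (Suc v) m"
    proof -
      have big: "n' k = 0" if "k > v" for k using n'(1) that by (simp add: Asupp_def)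
      have "ins (m - m') n' \<in> Asupp (Suc v)"
        unfolding Asupp_def by (auto simp: ins_def intro!: big)
      moreover have "(\<Sum>j=1..Suc v. ins (m - m') n' j) = m"
        using sumS[of "ins (m - m') n'"] N2i m' by (simp add: ins_def)
      ultimately show ?thesis using p' by (simp add: Fb_def)
    qed
  qed
  also have "\<dots> = (\<Sum>m'\<le>m. \<Sum>n'\<in>Fb v m'. Tm (Suc v) q (ins (m - m') n'))"
    unfolding S_def by (subst sum.Sigma) (auto simp: Fb_finite case_prod_beta)
  also have "\<dots> = (\<Sum>m'\<le>m. \<Sum>n'\<in>Fb v m'. (q^2)^(m^2) / qpoch (q^2) (q^2) (m - m') * Tm v q n')"
  proof (intro sum.cong refl)
    fix m' n' assume m': "m' \<in> {..m}" and n': "n' \<in> Fb v m'"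
    have "m - m' + (\<Sum>j=1..v. n' j) = m" using m' n' by (simp add: Fb_def)
    thus "Tm (Suc v) q (ins (m - m') n') = (q^2)^(m^2) / qpoch (q^2) (q^2) (m - m') * Tm v q n'"
      using Tm_ins[OF v, of q "m - m'" n'] by simp
  qed
  also have "\<dots> = (\<Sum>m'\<le>m. (q^2)^(m^2) / qpoch (q^2) (q^2) (m - m') * ((q^2)^(m'^2) * gch q (v-1) m'))"
  proof (rule sum.cong[OF refl])
    fix m' assume "m' \<in> {..m}"
    show "(\<Sum>n'\<in>Fb v m'. (q^2)^(m^2) / qpoch (q^2) (q^2) (m - m') * Tm v q n')
        = (q^2)^(m^2) / qpoch (q^2) (q^2) (m - m') * ((q^2)^(m'^2) * gch q (v-1) m')"
      by (subst sum_distrib_left[symmetric]) (simp only: Suc.IH)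
  qed
  also have "\<dots> = (q^2)^(m^2) * gch q (Suc v - 1) m"
  proof -
    have "gch q (Suc v - 1) m = gch q (Suc (v - 1)) m" using v by simp
    thus ?thesis by (simp add: sum_distrib_left mult_ac)
  qed
  finally show ?case .
qed

lemma Tm_bound:
  assumes q: "norm q < 1" and v: "1 \<le> v" and n: "n \<in> Asupp v"
    and B: "B \<ge> 0" "\<And>k. norm (1 / qpoch (q^2) (q^2) k) \<le> B"
    and B3: "B3 \<ge> 0" "\<And>k. norm (qpoch (q^3) (q^6) k) \<le> B3"
    and B1: "B1 \<ge> 0" "\<And>k. norm (1 / qpoch q (q^2) k) \<le> B1"
  shows "norm (Tm v q n) \<le> (B^v * B3 * B1) * norm (q^2) ^ ((\<Sum>j=1..v. n j)^2)"
proof -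
  define P where "P = qpoch (q^2) (q^2)"
  define E where "E = (\<Sum>i=1..v. (\<Sum>j=i..v. n j)^2)"
  define M where "M = (\<Sum>j=1..v. n j)"
  have nQ: "norm (q^2) \<le> 1" using q by (simp add: norm_power power_le_one)
  have EM: "M^2 \<le> E"
  proof -
    have "(\<lambda>i. (\<Sum>j=i..v. n j)^2) 1 \<le> (\<Sum>i\<in>{1..v}. (\<lambda>i. (\<Sum>j=i..v. n j)^2) i)"
      by (rule member_le_sum) (use v in auto)
    thus ?thesis unfolding E_def M_def by simp
  qed
  have pw: "norm (q^2) ^ E \<le> norm (q^2) ^ (M^2)"
    by (rule power_decreasing[OF EM]) (use nQ in auto)
  have Tm_eq: "Tm v q n = (q^2)^E * (\<Prod>i\<in>{1..<v}. 1 / P (n i)) * (1 / P (2 * n v)) * qpoch (q^3) (q^6) (n v) * (1 / qpoch q (q^2) (n v))"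
  proof -
    have inv: "(\<Prod>i\<in>{1..<v}. 1 / P (n i)) = 1 / (\<Prod>i\<in>{1..<v}. P (n i))" by (simp add: prod_dividef)
    show ?thesis unfolding inv unfolding Tm_def E_def P_def
      by (simp add: divide_inverse inverse_mult_distrib mult_ac)
  qed
  have pr: "norm (\<Prod>i\<in>{1..<v}. 1 / P (n i)) \<le> B^(v-1)"
  proof -
    have "norm (\<Prod>i\<in>{1..<v}. 1 / P (n i)) = (\<Prod>i\<in>{1..<v}. norm (1 / P (n i)))" by (rule prod_norm[symmetric])
    also have "\<dots> \<le> (\<Prod>i\<in>{1..<v}. B)" by (intro prod_mono) (use B in \<open>auto simp: P_def\<close>)
    also have "\<dots> = B^(v-1)" by simp
    finally show ?thesis .
  qed
  have "norm (Tm v q n) = norm (q^2)^E * norm (\<Prod>i\<in>{1..<v}. 1 / P (n i)) * norm (1 / P (2 * n v)) * norm (qpoch (q^3) (q^6) (n v)) * norm (1 / qpoch q (q^2) (n v))"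
    unfolding Tm_eq by (simp only: norm_mult norm_power)
  also have "\<dots> \<le> norm (q^2)^(M^2) * B^(v-1) * B * B3 * B1"
    by (intro mult_mono pw pr B(2)[unfolded P_def[symmetric]] B3(2) B1(2)) (use B B3 B1 in auto)
  also have "\<dots> = (B^v * B3 * B1) * norm (q^2) ^ (M^2)"
  proof -
    have "B^(v-1) * B = B^v" using v by (metis One_nat_def Suc_pred' less_eq_Suc_le power_Suc2)
    thus ?thesis by (simp add: mult_ac)
  qed
  finally show ?thesis unfolding M_def .
qed

lemma main_has_sum:
  assumes q: "norm q < 1" and v: "1 \<le> v"
  shows "(Tm v q has_sum (Qfun (q ^ (12 * v + 6)) (q ^ (2 * v + 1)) / qpoch_inf (q^2) (q^2))) (Asupp v)"
proof -
  define Q where "Q = q^2"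
  define N1 where "N1 = (\<lambda>n::nat\<Rightarrow>nat. \<Sum>j=1..v. n j)"
  have nQ: "norm Q < 1" using q by (simp add: Q_def norm_power power_less_one_iff)
  obtain B where B: "B > 0" "\<And>k. norm (1 / qpoch Q Q k) \<le> B"
    using qpoch_inv_bounded[OF nQ nQ] by blast
  obtain B1 where B1: "B1 > 0" "\<And>k. norm (1 / qpoch q Q k) \<le> B1"
    using qpoch_inv_bounded[OF nQ q] by blast
  have nq6: "norm (q^6) < 1" using q by (simp add: norm_power power_less_one_iff)
  obtain B3 where B3: "B3 > 0" "\<And>k. norm (qpoch (q^3) (q^6) k) \<le> B3"
    using qpoch_bounded[OF nq6] by blast
  define C where "C = B^v * B3 * B1"
  define c where "c = (\<lambda>m::nat. C * real (m+1)^v * norm Q ^ (m^2))"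
  have sc: "summable c" unfolding c_def by (rule summable_poly_gauss) (use nQ in auto)
  have c0: "c m \<ge> 0" for m using B B1 B3 by (simp add: c_def C_def)
  have ptb: "norm (Tm v q n) \<le> C * norm Q ^ ((N1 n)^2)" if "n \<in> Asupp v" for n
    unfolding C_def N1_def Q_def
    by (rule Tm_bound[OF q v that]) (use B B1 B3 in \<open>auto simp: Q_def\<close>)
  have fibb: "(\<Sum>n\<in>Fb v m. norm (Tm v q n)) \<le> c m" for m
  proof -
    have "(\<Sum>n\<in>Fb v m. norm (Tm v q n)) \<le> real (card (Fb v m)) * (C * norm Q ^ (m^2))"
    proof (rule sum_bounded_above)
      fix n assume "n \<in> Fb v m"
      thus "norm (Tm v q n) \<le> C * norm Q ^ (m^2)" using ptb[of n] by (simp add: Fb_def N1_def)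
    qed
    also have "\<dots> \<le> real ((m+1)^v) * (C * norm Q ^ (m^2))"
    proof (rule mult_right_mono)
      show "real (card (Fb v m)) \<le> real ((m+1)^v)" using Fb_card[of v m] by (simp only: of_nat_le_iff)
    qed (use B B1 B3 in \<open>auto simp: C_def\<close>)
    finally show ?thesis by (simp add: c_def mult_ac)
  qed
  have abs: "(\<lambda>n. norm (Tm v q n)) summable_on Asupp v"
  proof (rule nonneg_bdd_above_summable_on)
    show "bdd_above (sum (\<lambda>n. norm (Tm v q n)) ` {F. F \<subseteq> Asupp v \<and> finite F})"
    proof (rule bdd_aboveI2)
      fix F assume F: "F \<in> {F. F \<subseteq> Asupp v \<and> finite F}"
      hence FA: "F \<subseteq> Asupp v" and fF: "finite F" by auto
      have "(\<Sum>n\<in>F. norm (Tm v q n)) = (\<Sum>m\<in>N1 ` F. \<Sum>n\<in>{x\<in>F. N1 x = m}. norm (Tm v q n))"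
        by (rule sum.group[symmetric]) (use fF in auto)
      also have "\<dots> \<le> (\<Sum>m\<in>N1 ` F. c m)"
      proof (rule sum_mono)
        fix m assume "m \<in> N1 ` F"
        have "(\<Sum>n\<in>{x\<in>F. N1 x = m}. norm (Tm v q n)) \<le> (\<Sum>n\<in>Fb v m. norm (Tm v q n))"
          by (rule sum_mono2) (use FA Fb_finite in \<open>auto simp: Fb_def N1_def\<close>)
        also have "\<dots> \<le> c m" by (rule fibb)
        finally show "(\<Sum>n\<in>{x\<in>F. N1 x = m}. norm (Tm v q n)) \<le> c m" .
      qed
      also have "\<dots> \<le> suminf c"
        by (rule sum_le_suminf[OF sc]) (use fF c0 in auto)
      finally show "(\<Sum>n\<in>F. norm (Tm v q n)) \<le> suminf c" .
    qed
  qed auto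
  hence summ: "Tm v q summable_on Asupp v"
    using abs_summable_summable by blast
  define S' where "S' = infsum (Tm v q) (Asupp v)"
  have hs: "(Tm v q has_sum S') (Asupp v)" unfolding S'_def using summ by simp
  have bij: "bij_betw (\<lambda>n. (N1 n, n)) (Asupp v) (Sigma UNIV (Fb v))"
    by (rule bij_betwI[where g = snd]) (auto simp: Fb_def N1_def)
  have hs2: "((\<lambda>p. Tm v q (snd p)) has_sum S') (Sigma UNIV (Fb v))"
    using has_sum_reindex_bij_betw[OF bij, where f = "\<lambda>p. Tm v q (snd p)"] hs by simp
  have hs3: "((\<lambda>m. \<Sum>n\<in>Fb v m. Tm v q n) has_sum S') UNIV"
    by (rule has_sum_SigmaD[OF hs2]) (auto intro: has_sum_finiteI Fb_finite)
  hence "(\<lambda>m. \<Sum>n\<in>Fb v m. Tm v q n) sums S'" by (rule has_sum_imp_sums)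
  hence "(\<lambda>m. (q^2)^(m^2) * gch q (v-1) m) sums S'" by (simp add: fiber_sum[OF q v])
  moreover have "(\<lambda>m. (q^2)^(m^2) * gch q (v-1) m) sums (Qfun (q ^ (12 * v + 6)) (q ^ (2 * v + 1)) / qpoch_inf (q^2) (q^2))"
    by (rule Hsum(2)[OF q v])
  ultimately have "S' = Qfun (q ^ (12 * v + 6)) (q ^ (2 * v + 1)) / qpoch_inf (q^2) (q^2)"
    using sums_unique2 by blast
  thus ?thesis using hs by simp
qed

theorem mainTheorem14:
  fixes q :: complex and v :: nat
  assumes "norm q < 1" and "v \<ge> 1"
  shows "((\<lambda>n::nat \<Rightarrow> nat.
            (q^2) ^ (\<Sum>i=1..v. (\<Sum>j=i..v. n j)^2)
            / ((\<Prod>i\<in>{1..<v}. qpoch (q^2) (q^2) (n i)) * qpoch (q^2) (q^2) (2 * n v))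
            * (qpoch (q^3) (q^6) (n v) / qpoch q (q^2) (n v)))
         has_sum (Qfun (q ^ (12 * v + 6)) (q ^ (2 * v + 1)) / qpoch_inf (q^2) (q^2)))
         {n. \<forall>i. i \<notin> {1..v} \<longrightarrow> n i = 0}"
proof -
  have e1: "(\<lambda>n::nat \<Rightarrow> nat.
            (q^2) ^ (\<Sum>i=1..v. (\<Sum>j=i..v. n j)^2)
            / ((\<Prod>i\<in>{1..<v}. qpoch (q^2) (q^2) (n i)) * qpoch (q^2) (q^2) (2 * n v))
            * (qpoch (q^3) (q^6) (n v) / qpoch q (q^2) (n v))) = Tm v q"
    by (rule ext) (simp only: Tm_def)
  have e2: "{n. \<forall>i. i \<notin> {1..v} \<longrightarrow> n i = 0} = Asupp v" by (simp only: Asupp_def)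
  show ?thesis unfolding e1 e2 using main_has_sum[OF assms] .
qed

end
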